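(* Let $m>1$, $N\ge2$, $\chi>C_N$, and let $X_0\in\mathcal R^N$ satisfy $\mathcal F^N_m(X_0)<0$. Then the maximal solution $X$ in $\mathcal R^N$ of the gradient flow system with $X(0)=X_0$ blows up in finite time; in particular its maximal time of existence is finite.
   Context: $\mathcal R^N=\{X\in\mathbb R^N: X_1<\dots<X_N,\ \sum_iX_i=0\}$. $\mathcal F^N_m(X)=\frac1{m-1}\sum_{i=1}^{N-1}(X_{i+1}-X_i)^{1-m}-\frac{\chi}{m-1}\sum_{1\le i\ne j\le N}|X_i-X_j|^{1-m}$. $C_N$ is defined by $\frac1{C_N}=\max_{X\in\mathcal R^N}\frac{\sum_{1\le i\ne j\le N}|X_j-X_i|^{1-m}}{\sum_{i=1}^{N-1}(X_{i+1}-X_i)^{1-m}}$. Gradient flow system: for $i=1,\dots,N$, $\dot X_i=-(X_{i+1}-X_i)^{-m}+(X_i-X_{i-1})^{-m}+2\chi\sum_{j\ne i}\mathrm{sign}(j-i)|X_j-X_i|^{-m}$, the first term absent for $i=N$ and the second for $i=1$ (i.e. $\dot X=-\nabla\mathcal F^N_m(X)$). Blow-up in finite time: the maximal existence time $T$ is finite and there exist $i_0$ and $t_n\to T$ with $X_{i_0+1}(t_n)-X_{i_0}(t_n)\to0$. *)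

theory Defs
  imports "HOL-Analysis.Analysis"
begin

text \<open>Configurations X = (X_1,...,X_N) are functions nat => real; only indices 1..N matter.\<close>

definition in_R :: "nat \<Rightarrow> (nat \<Rightarrow> real) \<Rightarrow> bool" where
  "in_R N X \<longleftrightarrow> (\<forall>i\<in>{1..<N}. X i < X (i+1)) \<and> (\<Sum>i=1..N. X i) = 0"

definition gap_sum :: "nat \<Rightarrow> real \<Rightarrow> (nat \<Rightarrow> real) \<Rightarrow> real" where
  "gap_sum N m X = (\<Sum>i=1..N-1. (X (i+1) - X i) powr (1 - m))"

definition pair_sum :: "nat \<Rightarrow> real \<Rightarrow> (nat \<Rightarrow> real) \<Rightarrow> real" where
  "pair_sum N m X = (\<Sum>i=1..N. \<Sum>j\<in>{1..N}-{i}. \<bar>X i - X j\<bar> powr (1 - m))"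

definition F_energy :: "nat \<Rightarrow> real \<Rightarrow> real \<Rightarrow> (nat \<Rightarrow> real) \<Rightarrow> real" where
  "F_energy N m chi X = gap_sum N m X / (m - 1) - chi / (m - 1) * pair_sum N m X"

text \<open>1 / C_N = max over R^N of pair_sum / gap_sum (the max is attained; we use the supremum).\<close>
definition C_const :: "nat \<Rightarrow> real \<Rightarrow> real" where
  "C_const N m = 1 / (SUP X\<in>{X. in_R N X}. pair_sum N m X / gap_sum N m X)"

definition velocity :: "nat \<Rightarrow> real \<Rightarrow> real \<Rightarrow> (nat \<Rightarrow> real) \<Rightarrow> nat \<Rightarrow> real" where
  "velocity N m chi X i =
     (if i < N then - ((X (i+1) - X i) powr (- m)) else 0)
   + (if 1 < i then (X i - X (i-1)) powr (- m) else 0)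
   + 2 * chi * (\<Sum>j\<in>{1..N}-{i}. sgn (real j - real i) * \<bar>X j - X i\<bar> powr (- m))"

definition is_solution :: "nat \<Rightarrow> real \<Rightarrow> real \<Rightarrow> (nat \<Rightarrow> real) \<Rightarrow> ereal \<Rightarrow> (real \<Rightarrow> nat \<Rightarrow> real) \<Rightarrow> bool" where
  "is_solution N m chi X0 T X \<longleftrightarrow> 0 < T \<and> X 0 = X0 \<and>
     (\<forall>t. 0 \<le> t \<and> ereal t < T \<longrightarrow> in_R N (X t) \<and>
        (\<forall>i\<in>{1..N}. ((\<lambda>s. X s i) has_real_derivative velocity N m chi (X t) i)
                       (at t within {s. 0 \<le> s \<and> ereal s < T})))"

definition is_maximal_solution :: "nat \<Rightarrow> real \<Rightarrow> real \<Rightarrow> (nat \<Rightarrow> real) \<Rightarrow> ereal \<Rightarrow> (real \<Rightarrow> nat \<Rightarrow> real) \<Rightarrow> bool" where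
  "is_maximal_solution N m chi X0 T X \<longleftrightarrow> is_solution N m chi X0 T X \<and>
     \<not> (\<exists>T' Y. T < T' \<and> is_solution N m chi X0 T' Y \<and>
              (\<forall>t. 0 \<le> t \<and> ereal t < T \<longrightarrow> (\<forall>i\<in>{1..N}. Y t i = X t i)))"

end

theory Submission
  imports Defs
begin

lemma sum_offdiag_swap:
  fixes f :: "nat \<Rightarrow> nat \<Rightarrow> real"
  assumes "finite A"
  shows "(\<Sum>i\<in>A. \<Sum>j\<in>A-{i}. f i j) = (\<Sum>i\<in>A. \<Sum>j\<in>A-{i}. f j i)"
proof -
  have e: "\<And>g i. (\<Sum>j\<in>A-{i}. g j) = (\<Sum>j\<in>A. if j = i then 0 else g j)"
    using assms by (simp add: sum.If_cases Diff_eq Int_commute)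
  have "(\<Sum>i\<in>A. \<Sum>j\<in>A-{i}. f i j) = (\<Sum>i\<in>A. \<Sum>j\<in>A. if j = i then 0 else f i j)"
    by (simp add: e)
  also have "\<dots> = (\<Sum>j\<in>A. \<Sum>i\<in>A. if j = i then 0 else f i j)"
    by (rule sum.swap)
  also have "\<dots> = (\<Sum>i\<in>A. \<Sum>j\<in>A-{i}. f j i)"
    by (simp add: e eq_commute)
  finally show ?thesis .
qed

lemma gap_part:
  fixes w a :: "nat \<Rightarrow> real"
  assumes "N \<ge> 1"
  shows "(\<Sum>i=1..N. w i * ((if i < N then - a i else 0) + (if 1 < i then a (i-1) else 0)))
       = (\<Sum>i=1..<N. a i * (w (i+1) - w i))"
  using assms
proof (induction N rule: dec_induct)
  case base
  then show ?case by simp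
next
  case (step n)
  have "(\<Sum>i=1..Suc n. w i * ((if i < Suc n then - a i else 0) + (if 1 < i then a (i-1) else 0)))
      = (\<Sum>i=1..n. w i * ((if i < Suc n then - a i else 0) + (if 1 < i then a (i-1) else 0)))
        + w (Suc n) * a n"
    using step by (simp add: sum.cl_ivl_Suc)
  also have "(\<Sum>i=1..n. w i * ((if i < Suc n then - a i else 0) + (if 1 < i then a (i-1) else 0)))
     = (\<Sum>i=1..n. w i * ((if i < n then - a i else 0) + (if 1 < i then a (i-1) else 0))) - w n * a n"
  proof -
    have "(\<Sum>i=1..n. w i * ((if i < Suc n then - a i else 0) + (if 1 < i then a (i-1) else 0)))
        = (\<Sum>i=1..n. w i * ((if i < n then - a i else 0) + (if 1 < i then a (i-1) else 0)) + (if i = n then - w n * a n else 0))"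
      by (rule sum.cong) (auto simp: algebra_simps)
    also have "\<dots> = (\<Sum>i=1..n. w i * ((if i < n then - a i else 0) + (if 1 < i then a (i-1) else 0))) - w n * a n"
      using step by (simp add: sum.distrib)
    finally show ?thesis .
  qed
  finally show ?case using step by (simp add: algebra_simps)
qed

lemma pair_part:
  fixes w :: "nat \<Rightarrow> real" and K :: "nat \<Rightarrow> nat \<Rightarrow> real"
  assumes "finite A" and Ks: "\<And>i j. K i j = K j i"
  shows "(\<Sum>i\<in>A. w i * (2 * chi * (\<Sum>j\<in>A-{i}. sgn (real j - real i) * K i j)))
       = chi * (\<Sum>i\<in>A. \<Sum>j\<in>A-{i}. (w i - w j) * sgn (real j - real i) * K i j)"
proof -
  have s: "(\<Sum>i\<in>A. \<Sum>j\<in>A-{i}. w j * sgn (real j - real i) * K i j)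
       = (\<Sum>i\<in>A. \<Sum>j\<in>A-{i}. w i * sgn (real i - real j) * K j i)"
    by (rule sum_offdiag_swap[OF assms(1)])
  also have "\<dots> = - (\<Sum>i\<in>A. \<Sum>j\<in>A-{i}. w i * sgn (real j - real i) * K i j)"
  proof -
    have h: "\<And>i j. w i * sgn (real i - real j) * K j i = - (w i * sgn (real j - real i) * K i j)"
      by (auto simp: sgn_if Ks)
    show ?thesis by (simp only: h sum_negf)
  qed
  finally have s2: "(\<Sum>i\<in>A. \<Sum>j\<in>A-{i}. w j * sgn (real j - real i) * K i j) = - (\<Sum>i\<in>A. \<Sum>j\<in>A-{i}. w i * sgn (real j - real i) * K i j)" .
  have "(\<Sum>i\<in>A. \<Sum>j\<in>A-{i}. (w i - w j) * sgn (real j - real i) * K i j)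
     = (\<Sum>i\<in>A. \<Sum>j\<in>A-{i}. w i * sgn (real j - real i) * K i j) - (\<Sum>i\<in>A. \<Sum>j\<in>A-{i}. w j * sgn (real j - real i) * K i j)"
    by (simp add: algebra_simps sum_subtractf)
  also have "\<dots> = 2 * (\<Sum>i\<in>A. \<Sum>j\<in>A-{i}. w i * sgn (real j - real i) * K i j)"
    using s2 by simp
  finally show ?thesis
    by (simp add: sum_distrib_left mult.assoc mult.left_commute)
qed

lemma vel_weighted:
  fixes w X :: "nat \<Rightarrow> real"
  assumes "N \<ge> 1"
  shows "(\<Sum>i=1..N. w i * velocity N m chi X i) =
     (\<Sum>i=1..<N. (X (i+1) - X i) powr (-m) * (w (i+1) - w i))
     + chi * (\<Sum>i=1..N. \<Sum>j\<in>{1..N}-{i}. (w i - w j) * sgn (real j - real i) * \<bar>X j - X i\<bar> powr (-m))"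
proof -
  define a where "a i = (X (i+1) - X i) powr (-m)" for i
  define K where "K i j = \<bar>X j - X i\<bar> powr (-m)" for i j
  have v: "velocity N m chi X i = ((if i < N then - a i else 0) + (if 1 < i then a (i-1) else 0))
      + 2 * chi * (\<Sum>j\<in>{1..N}-{i}. sgn (real j - real i) * K i j)" for i
    unfolding velocity_def a_def K_def by auto
  have "(\<Sum>i=1..N. w i * velocity N m chi X i) =
     (\<Sum>i=1..N. w i * ((if i < N then - a i else 0) + (if 1 < i then a (i-1) else 0)))
     + (\<Sum>i\<in>{1..N}. w i * (2 * chi * (\<Sum>j\<in>{1..N}-{i}. sgn (real j - real i) * K i j)))"
    by (simp add: v distrib_left sum.distrib)
  also have "\<dots> = (\<Sum>i=1..<N. a i * (w (i+1) - w i))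
     + chi * (\<Sum>i\<in>{1..N}. \<Sum>j\<in>{1..N}-{i}. (w i - w j) * sgn (real j - real i) * K i j)"
    by (subst gap_part[OF assms], subst pair_part) (auto simp: K_def abs_minus_commute)
  finally show ?thesis by (simp add: a_def K_def)
qed

lemma sum_vel_zero:
  assumes "N \<ge> 1"
  shows "(\<Sum>i=1..N. velocity N m chi X i) = 0"
  using vel_weighted[OF assms, where w="\<lambda>_. 1" and X=X and m=m and chi=chi] by simp

lemma in_R_mono:
  fixes X :: "nat \<Rightarrow> real" and N i j :: nat
  assumes "\<forall>i\<in>{1..<N}. X i < X (i+1)" "1 \<le> i" "i < j" "j \<le> N"
  shows "X i < X j"
proof -
  have "\<forall>j. i < j \<longrightarrow> j \<le> N \<longrightarrow> X i < X j"
  proof (intro allI)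
    fix j :: nat show "i < j \<longrightarrow> j \<le> N \<longrightarrow> X i < X j"
    proof (induction j)
      case 0 then show ?case by simp
    next
      case (Suc n)
      show ?case
      proof (intro impI)
        assume h: "i < Suc n" "Suc n \<le> N"
        have x: "X n < X (Suc n)" using assms(1,2) h by auto
        show "X i < X (Suc n)"
        proof (cases "i = n")
          case True then show ?thesis using x by simp
        next
          case False then show ?thesis using Suc h x by auto
        qed
      qed
    qed
  qed
  then show ?thesis using assms by auto
qed

lemma powr_mul_self:
  assumes "(d::real) > 0" shows "d * d powr (-m) = d powr (1 - m)"
proof -
  have "d powr (1 + -m) = d powr 1 * d powr (-m)" by (rule powr_add)
  then show ?thesis using assms by simp
qed

lemma ivl_conv: "(N::nat) \<ge> 1 \<Longrightarrow> {1..N-1} = {1..<N}"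
  by auto

lemma in_R_lt:
  fixes X :: "nat \<Rightarrow> real"
  assumes "in_R N X" "i \<in> {1..N}" "j \<in> {1..N}" "i < j"
  shows "X i < X j"
  using assms in_R_mono[of N X i j] unfolding in_R_def by auto

lemma in_R_abs:
  fixes X :: "nat \<Rightarrow> real"
  assumes "in_R N X" "i \<in> {1..N}" "j \<in> {1..N}" "i \<noteq> j"
  shows "\<bar>X j - X i\<bar> = sgn (real j - real i) * (X j - X i)" and "\<bar>X j - X i\<bar> > 0"
proof -
  have "(\<bar>X j - X i\<bar> = sgn (real j - real i) * (X j - X i)) \<and> \<bar>X j - X i\<bar> > 0"
  proof (cases "i < j")
    case True
    then show ?thesis using in_R_lt[OF assms(1,2,3)] by auto
  next
    case False
    then have "j < i" using assms(4) by linarith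
    then show ?thesis using in_R_lt[OF assms(1,3,2)] by auto
  qed
  then show "\<bar>X j - X i\<bar> = sgn (real j - real i) * (X j - X i)" "\<bar>X j - X i\<bar> > 0" by auto
qed

lemma virial:
  fixes X :: "nat \<Rightarrow> real"
  assumes "N \<ge> 1" "in_R N X"
  shows "(\<Sum>i=1..N. X i * velocity N m chi X i) = gap_sum N m X - chi * pair_sum N m X"
proof -
  have g: "(X (i+1) - X i) powr (-m) * (X (i+1) - X i) = (X (i+1) - X i) powr (1-m)" if "i \<in> {1..<N}" for i
  proof -
    have "X (i+1) - X i > 0" using assms(2) that unfolding in_R_def by auto
    then show ?thesis using powr_mul_self by (simp add: mult.commute)
  qed
  have p: "(X i - X j) * sgn (real j - real i) * \<bar>X j - X i\<bar> powr (-m) = - (\<bar>X i - X j\<bar> powr (1-m))"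
    if "i \<in> {1..N}" "j \<in> {1..N}-{i}" for i j
  proof -
    have a: "\<bar>X j - X i\<bar> = sgn (real j - real i) * (X j - X i)" "\<bar>X j - X i\<bar> > 0"
      using in_R_abs[OF assms(2), of i j] that by auto
    have "(X i - X j) * sgn (real j - real i) = - \<bar>X j - X i\<bar>" using a(1) by (simp add: algebra_simps)
    then show ?thesis using powr_mul_self[OF a(2), of m] by (simp add: abs_minus_commute)
  qed
  have G1: "(\<Sum>i=1..<N. (X (i+1) - X i) powr (-m) * (X (i+1) - X i)) = (\<Sum>i=1..<N. (X (i+1) - X i) powr (1-m))"
    by (rule sum.cong) (use g in auto)
  have G2: "(\<Sum>i=1..N. \<Sum>j\<in>{1..N}-{i}. (X i - X j) * sgn (real j - real i) * \<bar>X j - X i\<bar> powr (-m))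
     = (\<Sum>i=1..N. \<Sum>j\<in>{1..N}-{i}. - (\<bar>X i - X j\<bar> powr (1-m)))"
    by (intro sum.cong refl) (use p in auto)
  show ?thesis
    unfolding vel_weighted[OF assms(1)] gap_sum_def pair_sum_def ivl_conv[OF assms(1)] G1 G2
    by (simp add: sum_negf)
qed

lemma energy_deriv:
  fixes X :: "real \<Rightarrow> nat \<Rightarrow> real"
  assumes N: "N \<ge> 1" and m: "m > 1" and tS: "t \<in> S" and inR: "\<And>s. s \<in> S \<Longrightarrow> in_R N (X s)"
    and d: "\<And>i. i \<in> {1..N} \<Longrightarrow> ((\<lambda>s. X s i) has_real_derivative velocity N m chi (X t) i) (at t within S)"
  shows "((\<lambda>s. F_energy N m chi (X s)) has_real_derivative - (\<Sum>i=1..N. (velocity N m chi (X t) i)^2)) (at t within S)"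
proof -
  define v where "v i = velocity N m chi (X t) i" for i
  define G where "G s = (\<Sum>i=1..<N. (X s (i+1) - X s i) powr (1-m)) / (m-1)
      - chi / (m-1) * (\<Sum>i=1..N. \<Sum>j\<in>{1..N}-{i}. (sgn (real j - real i) * (X s j - X s i)) powr (1-m))" for s
  have GF: "G s = F_energy N m chi (X s)" if "s \<in> S" for s
  proof -
    have "(\<Sum>i=1..N. \<Sum>j\<in>{1..N}-{i}. (sgn (real j - real i) * (X s j - X s i)) powr (1-m))
        = pair_sum N m (X s)"
      unfolding pair_sum_def
      by (intro sum.cong refl) (use in_R_abs(1)[OF inR[OF that]] in \<open>auto simp: abs_minus_commute\<close>)
    then show ?thesis unfolding G_def F_energy_def gap_sum_def ivl_conv[OF N] by simp
  qed
  have gpos: "X t (i+1) - X t i > 0" if "i \<in> {1..<N}" for i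
    using inR[OF tS] that unfolding in_R_def by auto
  have d1: "((\<lambda>s. \<Sum>i=1..<N. (X s (i+1) - X s i) powr (1-m)) has_real_derivative
      (\<Sum>i=1..<N. (1-m) * (X t (i+1) - X t i) powr (1-m-1) * (v (i+1) - v i))) (at t within S)"
  proof (rule DERIV_sum)
    fix i assume i: "i \<in> {1..<N}"
    have "((\<lambda>s. X s (i+1) - X s i) has_real_derivative v (i+1) - v i) (at t within S)"
      using d[of i] d[of "i+1"] i unfolding v_def by (auto intro!: DERIV_diff)
    from DERIV_chain2[OF has_real_derivative_powr[OF gpos[OF i], of "1-m"] this]
    show "((\<lambda>s. (X s (i+1) - X s i) powr (1-m)) has_real_derivative
       (1-m) * (X t (i+1) - X t i) powr (1-m-1) * (v (i+1) - v i)) (at t within S)"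
      by simp
  qed
  have d2: "((\<lambda>s. \<Sum>i=1..N. \<Sum>j\<in>{1..N}-{i}. (sgn (real j - real i) * (X s j - X s i)) powr (1-m)) has_real_derivative
      (\<Sum>i=1..N. \<Sum>j\<in>{1..N}-{i}. (1-m) * \<bar>X t j - X t i\<bar> powr (1-m-1) * (sgn (real j - real i) * (v j - v i)))) (at t within S)"
  proof (intro DERIV_sum)
    fix i j assume i: "i \<in> {1..N}" and j: "j \<in> {1..N}-{i}"
    have a: "\<bar>X t j - X t i\<bar> = sgn (real j - real i) * (X t j - X t i)" "\<bar>X t j - X t i\<bar> > 0"
      using in_R_abs[OF inR[OF tS], of i j] i j by auto
    have "((\<lambda>s. sgn (real j - real i) * (X s j - X s i)) has_real_derivative sgn (real j - real i) * (v j - v i)) (at t within S)"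
      using d[of i] d[of j] i j unfolding v_def by (auto intro!: DERIV_diff DERIV_cmult)
    from DERIV_chain2[OF has_real_derivative_powr[OF a(2)[unfolded a(1)], of "1-m"] this]
    show "((\<lambda>s. (sgn (real j - real i) * (X s j - X s i)) powr (1-m)) has_real_derivative
       (1-m) * \<bar>X t j - X t i\<bar> powr (1-m-1) * (sgn (real j - real i) * (v j - v i))) (at t within S)"
      using a(1) by simp
  qed
  have dG: "(G has_real_derivative
      (\<Sum>i=1..<N. (1-m) * (X t (i+1) - X t i) powr (1-m-1) * (v (i+1) - v i)) / (m-1)
      - chi / (m-1) * (\<Sum>i=1..N. \<Sum>j\<in>{1..N}-{i}. (1-m) * \<bar>X t j - X t i\<bar> powr (1-m-1) * (sgn (real j - real i) * (v j - v i)))) (at t within S)"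
    unfolding G_def by (intro DERIV_diff DERIV_cmult d2 DERIV_cdivide d1)
  have val: "(\<Sum>i=1..<N. (1-m) * (X t (i+1) - X t i) powr (1-m-1) * (v (i+1) - v i)) / (m-1)
      - chi / (m-1) * (\<Sum>i=1..N. \<Sum>j\<in>{1..N}-{i}. (1-m) * \<bar>X t j - X t i\<bar> powr (1-m-1) * (sgn (real j - real i) * (v j - v i)))
      = - (\<Sum>i=1..N. (v i)^2)"
  proof -
    have e1: "(\<Sum>i=1..<N. (1-m) * (X t (i+1) - X t i) powr (1-m-1) * (v (i+1) - v i)) / (m-1)
       = - (\<Sum>i=1..<N. (X t (i+1) - X t i) powr (-m) * (v (i+1) - v i))"
    proof -
      have "(\<Sum>i=1..<N. (1-m) * (X t (i+1) - X t i) powr (1-m-1) * (v (i+1) - v i)) / (m-1)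
         = ((1-m)/(m-1)) * (\<Sum>i=1..<N. (X t (i+1) - X t i) powr (1-m-1) * (v (i+1) - v i))"
        by (simp add: sum_distrib_left sum_divide_distrib mult.assoc)
      also have "(1-m)/(m-1) = -1" using m by (simp add: field_simps)
      finally show ?thesis by simp
    qed
    have e2: "chi / (m-1) * (\<Sum>i=1..N. \<Sum>j\<in>{1..N}-{i}. (1-m) * \<bar>X t j - X t i\<bar> powr (1-m-1) * (sgn (real j - real i) * (v j - v i)))
       = chi * (\<Sum>i=1..N. \<Sum>j\<in>{1..N}-{i}. (v i - v j) * sgn (real j - real i) * \<bar>X t j - X t i\<bar> powr (-m))"
    proof -
      have "chi / (m-1) * (\<Sum>i=1..N. \<Sum>j\<in>{1..N}-{i}. (1-m) * \<bar>X t j - X t i\<bar> powr (1-m-1) * (sgn (real j - real i) * (v j - v i)))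
         = chi * (\<Sum>i=1..N. \<Sum>j\<in>{1..N}-{i}. ((1-m)/(m-1)) * (\<bar>X t j - X t i\<bar> powr (1-m-1) * (sgn (real j - real i) * (v j - v i))))"
        by (simp add: sum_distrib_left mult.assoc)
      also have "(1-m)/(m-1) = -1" using m by (simp add: field_simps)
      finally show ?thesis by (simp add: algebra_simps)
    qed
    have sq: "(\<Sum>i=1..N. (v i)^2) = (\<Sum>i=1..N. v i * velocity N m chi (X t) i)"
      by (simp add: v_def power2_eq_square)
    show ?thesis unfolding e1 e2 sq vel_weighted[OF N] by simp
  qed
  have "(G has_real_derivative - (\<Sum>i=1..N. (velocity N m chi (X t) i)^2)) (at t within S)"
    using dG val by (simp add: v_def)
  then show ?thesis
    by (rule has_field_derivative_transform_within[where d=1]) (use tS GF in auto)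
qed

lemma deriv_nonpos_mono:
  fixes f f' :: "real \<Rightarrow> real"
  assumes "a \<le> b"
    and d: "\<And>x. x \<in> {a..b} \<Longrightarrow> (f has_real_derivative f' x) (at x within {a..b})"
    and n: "\<And>x. x \<in> {a..b} \<Longrightarrow> f' x \<le> 0"
  shows "f b \<le> f a"
proof (rule DERIV_nonpos_imp_decreasing_open[OF assms(1)])
  show "continuous_on {a..b} f" by (rule DERIV_continuous_on[OF d])
  fix x assume x: "a < x" "x < b"
  then have "(f has_real_derivative f' x) (at x)"
    using d[of x] at_within_Icc_at[OF x] by auto
  then show "\<exists>y. (f has_real_derivative y) (at x) \<and> y \<le> 0" using n[of x] x by auto
qed

lemma solution_dom:
  assumes "is_solution N m chi X0 T X" "0 \<le> t" "ereal t < T"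
  shows "{0..t} \<subseteq> {s. 0 \<le> s \<and> ereal s < T}"
  using assms(3) by auto (meson ereal_less_eq(3) le_less_trans)

lemma finite_time_bound:
  fixes X :: "real \<Rightarrow> nat \<Rightarrow> real"
  assumes m: "m > 1" and N: "N \<ge> 1" and F0: "F_energy N m chi X0 < 0"
    and sol: "is_solution N m chi X0 T X" and t: "0 \<le> t" "ereal t < T"
  shows "t \<le> (\<Sum>i=1..N. (X0 i)^2) / (2 * (m-1) * (- F_energy N m chi X0))"
proof -
  define D where "D = {s. 0 \<le> s \<and> ereal s < T}"
  have sub: "{0..t} \<subseteq> D" using solution_dom[OF sol t] D_def by simp
  have inR: "\<And>s. s \<in> D \<Longrightarrow> in_R N (X s)" and
    dX: "\<And>s i. s \<in> D \<Longrightarrow> i \<in> {1..N} \<Longrightarrow> ((\<lambda>s. X s i) has_real_derivative velocity N m chi (X s) i) (at s within D)"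
    and X0: "X 0 = X0"
    using sol unfolding is_solution_def D_def by auto
  define F0v where "F0v = F_energy N m chi X0"
  have dF: "((\<lambda>s. F_energy N m chi (X s)) has_real_derivative - (\<Sum>i=1..N. (velocity N m chi (X s) i)^2)) (at s within D)"
    if "s \<in> D" for s
    by (rule energy_deriv[OF N m that inR dX]) (use that in auto)
  have Fdec: "F_energy N m chi (X s) \<le> F0v" if "s \<in> {0..t}" for s
  proof -
    have "F_energy N m chi (X s) \<le> F_energy N m chi (X 0)"
    proof (rule deriv_nonpos_mono[where f="\<lambda>s. F_energy N m chi (X s)" and a=0 and b=s and f'="\<lambda>s. - (\<Sum>i=1..N. (velocity N m chi (X s) i)^2)"])
      show "0 \<le> s" using that by simp
      fix x assume x: "x \<in> {0..s}"
      then have "x \<in> D" using sub that by auto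
      then show "((\<lambda>s. F_energy N m chi (X s)) has_real_derivative - (\<Sum>i=1..N. (velocity N m chi (X x) i)^2)) (at x within {0..s})"
      proof (rule DERIV_subset[OF dF])
        show "{0..s} \<subseteq> D" using sub that by auto
      qed
      show "- (\<Sum>i=1..N. (velocity N m chi (X x) i)^2) \<le> 0" by (simp add: sum_nonneg)
    qed
    then show ?thesis using X0 F0v_def by simp
  qed
  define V where "V s = (\<Sum>i=1..N. (X s i)^2)" for s
  have dV: "(V has_real_derivative 2 * (m-1) * F_energy N m chi (X s)) (at s within D)" if "s \<in> D" for s
  proof -
    have "(V has_real_derivative (\<Sum>i=1..N. 2 * X s i * velocity N m chi (X s) i)) (at s within D)"
      unfolding V_def
      by (intro DERIV_sum) (use dX[OF that] in \<open>auto intro!: derivative_eq_intros\<close>)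
    moreover have "(\<Sum>i=1..N. 2 * X s i * velocity N m chi (X s) i) = 2 * (m-1) * F_energy N m chi (X s)"
    proof -
      have "(\<Sum>i=1..N. 2 * X s i * velocity N m chi (X s) i) = 2 * (\<Sum>i=1..N. X s i * velocity N m chi (X s) i)"
        by (simp add: sum_distrib_left mult.assoc)
      also have "\<dots> = 2 * (gap_sum N m (X s) - chi * pair_sum N m (X s))"
        using virial[OF N inR[OF that]] by simp
      also have "\<dots> = 2 * ((m-1) * F_energy N m chi (X s))"
      proof -
        have "m - 1 \<noteq> 0" using m by simp
        then show ?thesis unfolding F_energy_def by (simp add: right_diff_distrib)
      qed
      also have "\<dots> = 2 * (m-1) * F_energy N m chi (X s)" by simp
      finally show ?thesis .
    qed
    ultimately show ?thesis by simp
  qed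
  have "V t - 2 * (m-1) * F0v * t \<le> V 0 - 2 * (m-1) * F0v * 0"
  proof (rule deriv_nonpos_mono[where f="\<lambda>s. V s - 2 * (m-1) * F0v * s" and a=0 and b=t and f'="\<lambda>s. 2 * (m-1) * F_energy N m chi (X s) - 2 * (m-1) * F0v"])
    show "0 \<le> t" by fact
    fix x assume x: "x \<in> {0..t}"
    then have "x \<in> D" using sub by auto
    then show "((\<lambda>s. V s - 2 * (m-1) * F0v * s) has_real_derivative 2 * (m-1) * F_energy N m chi (X x) - 2 * (m-1) * F0v) (at x within {0..t})"
      using sub by (auto intro!: derivative_eq_intros DERIV_subset[OF dV])
    show "2 * (m-1) * F_energy N m chi (X x) - 2 * (m-1) * F0v \<le> 0"
      using Fdec[OF x] m by (simp add: mult_left_mono)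
  qed
  moreover have "V t \<ge> 0" unfolding V_def by (simp add: sum_nonneg)
  moreover have "V 0 = (\<Sum>i=1..N. (X0 i)^2)" using X0 V_def by simp
  ultimately have "- (2 * (m-1) * F0v * t) \<le> (\<Sum>i=1..N. (X0 i)^2)" by linarith
  then have le: "(2 * (m-1) * (- F0v)) * t \<le> (\<Sum>i=1..N. (X0 i)^2)" by (simp add: algebra_simps)
  have pos: "2 * (m-1) * (- F0v) > 0" using m F0 F0v_def by (simp add: mult_pos_neg)
  have "t \<le> (\<Sum>i=1..N. (X0 i)^2) / (2 * (m-1) * (- F0v))"
    using le pos by (metis pos_le_divide_eq mult.commute)
  then show ?thesis unfolding F0v_def .
qed

lemma finite_time:
  fixes X :: "real \<Rightarrow> nat \<Rightarrow> real"
  assumes m: "m > 1" and N: "N \<ge> 1" and F0: "F_energy N m chi X0 < 0"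
    and sol: "is_solution N m chi X0 T X"
  shows "T < \<infinity>"
proof (rule ccontr)
  assume "\<not> T < \<infinity>"
  then have T: "T = \<infinity>" by simp
  define B where "B = (\<Sum>i=1..N. (X0 i)^2) / (2 * (m-1) * (- F_energy N m chi X0))"
  have "B \<ge> 0" unfolding B_def using m F0 by (intro divide_nonneg_pos) (auto simp: sum_nonneg mult_pos_neg)
  then have "B + 1 \<le> B" using finite_time_bound[OF m N F0 sol, of "B+1"] T B_def by simp
  then show False by simp
qed

definition inD :: "nat \<Rightarrow> real \<Rightarrow> (nat \<Rightarrow> real) \<Rightarrow> bool" where
  "inD N \<delta> Y \<longleftrightarrow> (\<forall>i\<in>{1..<N}. \<delta> \<le> Y (i+1) - Y i)"

definition nrm :: "nat \<Rightarrow> (nat \<Rightarrow> real) \<Rightarrow> (nat \<Rightarrow> real) \<Rightarrow> real" where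
  "nrm N Y W = (\<Sum>i=1..N. \<bar>Y i - W i\<bar>)"

lemma nrm_ge: "i \<in> {1..N} \<Longrightarrow> \<bar>Y i - W i\<bar> \<le> nrm N Y W"
  unfolding nrm_def by (rule member_le_sum) auto

lemma nrm_nonneg: "nrm N Y W \<ge> 0"
  unfolding nrm_def by (simp add: sum_nonneg)

lemma inD_mono:
  fixes Y :: "nat \<Rightarrow> real" and N i j :: nat
  assumes "inD N \<delta> Y" "\<delta> > 0" "1 \<le> i" "i < j" "j \<le> N"
  shows "Y j - Y i \<ge> \<delta>"
proof -
  have "\<forall>j. i < j \<longrightarrow> j \<le> N \<longrightarrow> Y j - Y i \<ge> \<delta>"
  proof (intro allI)
    fix j :: nat show "i < j \<longrightarrow> j \<le> N \<longrightarrow> Y j - Y i \<ge> \<delta>"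
    proof (induction j)
      case 0 then show ?case by simp
    next
      case (Suc n)
      show ?case
      proof (intro impI)
        assume h: "i < Suc n" "Suc n \<le> N"
        have x: "Y (Suc n) - Y n \<ge> \<delta>" using assms(1,3) h unfolding inD_def by auto
        show "Y (Suc n) - Y i \<ge> \<delta>"
        proof (cases "i = n")
          case True then show ?thesis using x by simp
        next
          case False then show ?thesis using Suc h x assms(2) by auto
        qed
      qed
    qed
  qed
  then show ?thesis using assms by auto
qed

lemma inD_abs:
  fixes Y :: "nat \<Rightarrow> real"
  assumes "inD N \<delta> Y" "\<delta> > 0" "i \<in> {1..N}" "j \<in> {1..N}" "i \<noteq> j"
  shows "\<bar>Y j - Y i\<bar> \<ge> \<delta>"
proof (cases "i < j")
  case True
  then show ?thesis using inD_mono[OF assms(1,2), of i j] assms by auto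
next
  case False
  then have "j < i" using assms(5) by linarith
  then show ?thesis using inD_mono[OF assms(1,2), of j i] assms by auto
qed

lemma inD_in_R:
  assumes "inD N \<delta> Y" "\<delta> > 0" "(\<Sum>i=1..N. Y i) = 0"
  shows "in_R N Y"
  using assms unfolding inD_def in_R_def by force

lemma powr_neg_le:
  fixes a \<delta> m :: real
  assumes "a \<ge> \<delta>" "\<delta> > 0" "m \<ge> 0"
  shows "a powr (-m) \<le> \<delta> powr (-m)"
  using powr_mono2'[of "-m" \<delta> a] assms by auto

lemma powr_lip:
  fixes a b \<delta> m :: real
  assumes "a \<ge> \<delta>" "b \<ge> \<delta>" "\<delta> > 0" "m > 0"
  shows "\<bar>a powr (-m) - b powr (-m)\<bar> \<le> m * \<delta> powr (-m-1) * \<bar>a - b\<bar>"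
proof -
  have "norm ((\<lambda>x. x powr (-m)) a - (\<lambda>x. x powr (-m)) b) \<le> (m * \<delta> powr (-m-1)) * norm (a - b)"
  proof (rule field_differentiable_bound[where S="{\<delta>..}" and f'="\<lambda>x. -m * x powr (-m-1)"])
    show "convex {\<delta>..}" by (rule convex_real_interval)
    fix z assume z: "z \<in> {\<delta>..}"
    then have "z > 0" using assms by auto
    then show "((\<lambda>x. x powr (-m)) has_field_derivative -m * z powr (-m-1)) (at z within {\<delta>..})"
      using has_real_derivative_powr[of z "-m"] by (auto intro: has_field_derivative_at_within)
    have "z powr (-m-1) \<le> \<delta> powr (-m-1)" using powr_mono2'[of "-m-1" \<delta> z] z assms by auto
    then show "norm (-m * z powr (-m-1)) \<le> m * \<delta> powr (-m-1)"
      using assms by (simp add: abs_mult)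
  qed (use assms in auto)
  then show ?thesis by simp
qed

lemma abs3:
  fixes a b d c1 e chi :: real
  assumes "\<bar>a\<bar> \<le> c1" "\<bar>b\<bar> \<le> c1" "\<bar>d\<bar> \<le> e"
  shows "\<bar>a + b + 2 * chi * d\<bar> \<le> c1 + c1 + 2 * \<bar>chi\<bar> * e"
proof -
  have "\<bar>2 * chi * d\<bar> = 2 * \<bar>chi\<bar> * \<bar>d\<bar>" by (simp add: abs_mult)
  moreover have "2 * \<bar>chi\<bar> * \<bar>d\<bar> \<le> 2 * \<bar>chi\<bar> * e" using assms(3) by (intro mult_left_mono) auto
  moreover have "\<bar>a + b + 2 * chi * d\<bar> \<le> \<bar>a\<bar> + \<bar>b\<bar> + \<bar>2 * chi * d\<bar>"
    using abs_triangle_ineq[of "a+b" "2*chi*d"] abs_triangle_ineq[of a b] by linarith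
  ultimately show ?thesis using assms by linarith
qed

lemma diff3: "((a1::real) + b1 + 2*chi*q1) - (a2 + b2 + 2*chi*q2) = (a1-a2) + (b1-b2) + 2*chi*(q1-q2)"
  by (simp add: algebra_simps)

definition velM :: "nat \<Rightarrow> real \<Rightarrow> real \<Rightarrow> real \<Rightarrow> real" where
  "velM N m chi \<delta> = \<delta> powr (-m) * (2 + 2 * \<bar>chi\<bar> * real N)"

definition velL :: "nat \<Rightarrow> real \<Rightarrow> real \<Rightarrow> real \<Rightarrow> real" where
  "velL N m chi \<delta> = m * \<delta> powr (-m-1) * 2 * (2 + 2 * \<bar>chi\<bar> * real N)"

lemma sum_bound_card:
  fixes f :: "nat \<Rightarrow> real"
  assumes "\<And>j. j \<in> A \<Longrightarrow> \<bar>f j\<bar> \<le> c" "A \<subseteq> {1..N}" "c \<ge> 0"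
  shows "\<bar>\<Sum>j\<in>A. f j\<bar> \<le> real N * c"
proof -
  have fin: "finite A" using assms(2) finite_subset by blast
  have c: "c \<ge> 0" if "A \<noteq> {}" using assms(1) that by (meson abs_ge_zero all_not_in_conv order_trans)
  have "\<bar>\<Sum>j\<in>A. f j\<bar> \<le> (\<Sum>j\<in>A. \<bar>f j\<bar>)" by (rule sum_abs)
  also have "\<dots> \<le> (\<Sum>j\<in>A. c)" by (rule sum_mono) (use assms in auto)
  also have "\<dots> = real (card A) * c" by simp
  also have "\<dots> \<le> real N * c"
  proof (cases "A = {}")
    case False
    have "card A \<le> card {1..N}" by (rule card_mono) (use assms in auto)
    then have "real (card A) \<le> real N" by simp
    then show ?thesis using c[OF False] by (simp add: mult_right_mono)
  qed (use assms in simp)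
  finally show ?thesis .
qed

lemma vel_bound:
  assumes "inD N \<delta> Y" "\<delta> > 0" "m > 0" "i \<in> {1..N}"
  shows "\<bar>velocity N m chi Y i\<bar> \<le> velM N m chi \<delta>"
proof -
  define c where "c = \<delta> powr (-m)"
  have c0: "c \<ge> 0" unfolding c_def by simp
  have A: "\<bar>(if i < N then - ((Y (i+1) - Y i) powr (- m)) else 0)\<bar> \<le> c"
  proof (cases "i < N")
    case True
    then have "Y (i+1) - Y i \<ge> \<delta>" using assms unfolding inD_def by auto
    then show ?thesis using powr_neg_le[of \<delta> "Y (i+1) - Y i" m] assms unfolding c_def by auto
  qed (simp add: c0)
  have B: "\<bar>(if 1 < i then (Y i - Y (i-1)) powr (- m) else 0)\<bar> \<le> c"
  proof (cases "1 < i")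
    case True
    have k: "i-1 \<in> {1..<N}" using True assms by auto
    have "Y (i-1+1) - Y (i-1) \<ge> \<delta>" using assms(1) k unfolding inD_def by blast
    then have "Y i - Y (i-1) \<ge> \<delta>" using True by simp
    then show ?thesis using powr_neg_le[of \<delta> "Y i - Y (i-1)" m] assms unfolding c_def by auto
  qed (simp add: c0)
  have C: "\<bar>\<Sum>j\<in>{1..N}-{i}. sgn (real j - real i) * \<bar>Y j - Y i\<bar> powr (- m)\<bar> \<le> real N * c"
  proof (rule sum_bound_card)
    fix j assume j: "j \<in> {1..N}-{i}"
    have "\<bar>Y j - Y i\<bar> powr (-m) \<le> c"
      using powr_neg_le[OF inD_abs[OF assms(1,2,4), of j]] j assms unfolding c_def by auto
    then show "\<bar>sgn (real j - real i) * \<bar>Y j - Y i\<bar> powr (- m)\<bar> \<le> c"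
      by (auto simp: abs_mult sgn_if)
  qed (use c0 in auto)
  have "\<bar>velocity N m chi Y i\<bar> \<le> c + c + 2 * \<bar>chi\<bar> * (real N * c)"
    unfolding velocity_def by (rule abs3[OF A B C])
  also have "\<dots> = velM N m chi \<delta>" unfolding velM_def c_def by (simp add: algebra_simps)
  finally show ?thesis .
qed

lemma vel_lip:
  assumes "inD N \<delta> Y" "inD N \<delta> W" "\<delta> > 0" "m > 0" "i \<in> {1..N}"
  shows "\<bar>velocity N m chi Y i - velocity N m chi W i\<bar> \<le> velL N m chi \<delta> * nrm N Y W"
proof -
  define c where "c = m * \<delta> powr (-m-1) * (2 * nrm N Y W)"
  have c0: "c \<ge> 0" unfolding c_def using assms nrm_nonneg by simp
  have dif: "\<bar>(Y p - Y q) - (W p - W q)\<bar> \<le> 2 * nrm N Y W" if "p \<in> {1..N}" "q \<in> {1..N}" for p q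
    using nrm_ge[OF that(1), of Y W] nrm_ge[OF that(2), of Y W] by linarith
  have A: "\<bar>(if i < N then - ((Y (i+1) - Y i) powr (- m)) else 0) - (if i < N then - ((W (i+1) - W i) powr (- m)) else 0)\<bar> \<le> c"
  proof (cases "i < N")
    case True
    then have "Y (i+1) - Y i \<ge> \<delta>" "W (i+1) - W i \<ge> \<delta>" using assms unfolding inD_def by auto
    from powr_lip[OF this assms(3,4)] have "\<bar>(Y (i+1) - Y i) powr (-m) - (W (i+1) - W i) powr (-m)\<bar> \<le> m * \<delta> powr (-m-1) * \<bar>(Y (i+1) - Y i) - (W (i+1) - W i)\<bar>" .
    also have "\<dots> \<le> c" unfolding c_def using dif[of "i+1" i] True assms by (intro mult_left_mono) auto
    finally show ?thesis using True by simp
  qed (simp add: c0)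
  have B: "\<bar>(if 1 < i then (Y i - Y (i-1)) powr (- m) else 0) - (if 1 < i then (W i - W (i-1)) powr (- m) else 0)\<bar> \<le> c"
  proof (cases "1 < i")
    case True
    have k: "i-1 \<in> {1..<N}" using True assms by auto
    have "Y (i-1+1) - Y (i-1) \<ge> \<delta>" "W (i-1+1) - W (i-1) \<ge> \<delta>" using assms(1,2) k unfolding inD_def by blast+
    then have g: "Y i - Y (i-1) \<ge> \<delta>" "W i - W (i-1) \<ge> \<delta>" using True by auto
    from powr_lip[OF g assms(3,4)] have "\<bar>(Y i - Y (i-1)) powr (-m) - (W i - W (i-1)) powr (-m)\<bar> \<le> m * \<delta> powr (-m-1) * \<bar>(Y i - Y (i-1)) - (W i - W (i-1))\<bar>" .
    also have "\<dots> \<le> c" unfolding c_def using dif[of i "i-1"] k True assms by (intro mult_left_mono) auto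
    finally show ?thesis using True by simp
  qed (simp add: c0)
  have C: "\<bar>(\<Sum>j\<in>{1..N}-{i}. sgn (real j - real i) * \<bar>Y j - Y i\<bar> powr (- m)) - (\<Sum>j\<in>{1..N}-{i}. sgn (real j - real i) * \<bar>W j - W i\<bar> powr (- m))\<bar> \<le> real N * c"
    unfolding sum_subtractf[symmetric]
  proof (rule sum_bound_card)
    fix j assume j: "j \<in> {1..N}-{i}"
    have a: "\<bar>Y j - Y i\<bar> \<ge> \<delta>" "\<bar>W j - W i\<bar> \<ge> \<delta>"
      using inD_abs[OF assms(1,3,5), of j] inD_abs[OF assms(2,3,5), of j] j by auto
    have "\<bar>\<bar>Y j - Y i\<bar> powr (-m) - \<bar>W j - W i\<bar> powr (-m)\<bar> \<le> m * \<delta> powr (-m-1) * \<bar>\<bar>Y j - Y i\<bar> - \<bar>W j - W i\<bar>\<bar>"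
      by (rule powr_lip[OF a assms(3,4)])
    also have "\<dots> \<le> c" unfolding c_def using dif[of j i] j assms
      by (intro mult_left_mono) (auto simp: abs_triangle_ineq3 intro: order_trans[OF abs_triangle_ineq3])
    finally have "\<bar>\<bar>Y j - Y i\<bar> powr (-m) - \<bar>W j - W i\<bar> powr (-m)\<bar> \<le> c" .
    then show "\<bar>sgn (real j - real i) * \<bar>Y j - Y i\<bar> powr (- m) - sgn (real j - real i) * \<bar>W j - W i\<bar> powr (- m)\<bar> \<le> c"
      by (auto simp: sgn_if abs_minus_commute)
  qed (use c0 in auto)
  have "\<bar>velocity N m chi Y i - velocity N m chi W i\<bar> \<le> c + c + 2 * \<bar>chi\<bar> * (real N * c)"
  proof -
    have e: "velocity N m chi Y i - velocity N m chi W i =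
      ((if i < N then - ((Y (i+1) - Y i) powr (- m)) else 0) - (if i < N then - ((W (i+1) - W i) powr (- m)) else 0))
      + ((if 1 < i then (Y i - Y (i-1)) powr (- m) else 0) - (if 1 < i then (W i - W (i-1)) powr (- m) else 0))
      + 2 * chi * ((\<Sum>j\<in>{1..N}-{i}. sgn (real j - real i) * \<bar>Y j - Y i\<bar> powr (- m)) - (\<Sum>j\<in>{1..N}-{i}. sgn (real j - real i) * \<bar>W j - W i\<bar> powr (- m)))"
      unfolding velocity_def by (rule diff3)
    show ?thesis unfolding e by (rule abs3[OF A B C])
  qed
  also have "\<dots> = velL N m chi \<delta> * nrm N Y W" unfolding velL_def c_def by (simp add: algebra_simps)
  finally show ?thesis .
qed

lemma inD_close:
  assumes "inD N (2*\<delta>) Z" "\<And>i. i \<in> {1..N} \<Longrightarrow> \<bar>Y i - Z i\<bar> \<le> \<delta>/2"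
  shows "inD N \<delta> Y"
  unfolding inD_def
proof
  fix i assume i: "i \<in> {1..<N}"
  have "\<bar>Y (i+1) - Z (i+1)\<bar> \<le> \<delta>/2" "\<bar>Y i - Z i\<bar> \<le> \<delta>/2" "2*\<delta> \<le> Z (i+1) - Z i"
    using assms i unfolding inD_def by auto
  then show "\<delta> \<le> Y (i+1) - Y i" by linarith
qed

lemma vel_cont:
  fixes Y :: "real \<Rightarrow> nat \<Rightarrow> real"
  assumes c: "\<And>j. j \<in> {1..N} \<Longrightarrow> continuous_on S (\<lambda>t. Y t j)"
    and D: "\<And>t. t \<in> S \<Longrightarrow> inD N \<delta> (Y t)" and "\<delta> > 0" "m > 0" "i \<in> {1..N}"
  shows "continuous_on S (\<lambda>t. velocity N m chi (Y t) i)"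
  unfolding continuous_on_def
proof
  fix s assume s: "s \<in> S"
  have cn: "continuous_on S (\<lambda>t. velL N m chi \<delta> * nrm N (Y t) (Y s))"
    unfolding nrm_def by (intro continuous_intros c) auto
  then have "((\<lambda>t. velL N m chi \<delta> * nrm N (Y t) (Y s)) \<longlongrightarrow> velL N m chi \<delta> * nrm N (Y s) (Y s)) (at s within S)"
    using s unfolding continuous_on_def by blast
  then have l0: "((\<lambda>t. velL N m chi \<delta> * nrm N (Y t) (Y s)) \<longlongrightarrow> 0) (at s within S)"
    by (simp add: nrm_def)
  have "((\<lambda>t. velocity N m chi (Y t) i - velocity N m chi (Y s) i) \<longlongrightarrow> 0) (at s within S)"
  proof (rule Lim_null_comparison[OF _ l0])
    show "\<forall>\<^sub>F t in at s within S. norm (velocity N m chi (Y t) i - velocity N m chi (Y s) i) \<le> velL N m chi \<delta> * nrm N (Y t) (Y s)"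
      unfolding eventually_at_filter
      by (rule always_eventually) (use vel_lip[OF D D[OF s] assms(3,4,5)] in auto)
  qed
  then show "((\<lambda>t. velocity N m chi (Y t) i) \<longlongrightarrow> velocity N m chi (Y s) i) (at s within S)"
    by (simp add: Lim_null[symmetric])
qed

lemma deriv_bound:
  fixes f f' :: "real \<Rightarrow> real"
  assumes "a \<le> b" and d: "\<And>x. x \<in> {a..b} \<Longrightarrow> (f has_real_derivative f' x) (at x within {a..b})"
    and B: "\<And>x. x \<in> {a..b} \<Longrightarrow> \<bar>f' x\<bar> \<le> B"
  shows "\<bar>f b - f a\<bar> \<le> B * (b - a)"
proof -
  have "norm (f b - f a) \<le> B * norm (b - a)"
  proof (rule field_differentiable_bound[where S="{a..b}" and f'=f'])
    show "convex {a..b}" by (rule convex_real_interval)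
  qed (use d B assms in auto)
  then show ?thesis using assms by simp
qed

lemma nrm_le_card:
  assumes "\<And>i. i \<in> {1..N} \<Longrightarrow> \<bar>Y i - W i\<bar> \<le> b"
  shows "nrm N Y W \<le> real N * b"
  unfolding nrm_def using sum_bounded_above[of "{1..N}" "\<lambda>i. \<bar>Y i - W i\<bar>" b] assms by auto

lemma le_of_lim:
  fixes E :: "nat \<Rightarrow> real"
  assumes "\<And>n. x \<le> a + E n" "E \<longlonglongrightarrow> 0"
  shows "x \<le> a"
proof -
  have "(\<lambda>n. a + E n) \<longlonglongrightarrow> a + 0" by (intro tendsto_intros assms(2))
  then show ?thesis using assms(1) by (intro LIMSEQ_le_const[where X="\<lambda>n. a + E n"]) auto
qed

locale picard_loc =
  fixes N :: nat and m chi \<delta> :: real and Z :: "nat \<Rightarrow> real" and c :: real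
  assumes N1: "N \<ge> 1" and m1: "m > 1" and dpos: "\<delta> > 0" and Zd: "inD N (2*\<delta>) Z"
begin

definition "MM = velM N m chi \<delta>"
definition "LL = velL N m chi \<delta>"
definition "hh = min (\<delta> / (2 * MM)) (1 / (2 * real N * LL))"

lemma MM_pos: "MM > 0"
  unfolding MM_def velM_def using dpos by (intro mult_pos_pos) (auto intro: add_pos_nonneg)

lemma LL_pos: "LL > 0"
  unfolding LL_def velL_def using dpos m1 by (intro mult_pos_pos) (auto intro: add_pos_nonneg)

lemma hh_pos: "hh > 0"
  unfolding hh_def using MM_pos LL_pos N1 dpos by auto

lemma hh_M: "MM * hh \<le> \<delta>/2"
proof -
  have "hh \<le> \<delta> / (2 * MM)" unfolding hh_def by simp
  then have "MM * hh \<le> MM * (\<delta> / (2 * MM))" using MM_pos by (intro mult_left_mono) auto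
  also have "\<dots> = \<delta>/2" using MM_pos by simp
  finally show ?thesis .
qed

lemma hh_L: "real N * LL * hh \<le> 1/2"
proof -
  have NL: "real N * LL > 0" using N1 LL_pos by simp
  have "hh \<le> 1 / (2 * real N * LL)" unfolding hh_def by simp
  then have "real N * LL * hh \<le> real N * LL * (1 / (2 * real N * LL))" using NL by (intro mult_left_mono) auto
  also have "\<dots> = 1/2" using N1 LL_pos by (simp add: field_simps)
  finally show ?thesis .
qed

primrec pic :: "nat \<Rightarrow> real \<Rightarrow> nat \<Rightarrow> real" where
  "pic 0 = (\<lambda>t i. Z i)"
| "pic (Suc k) = (\<lambda>t i. Z i + integral {c..t} (\<lambda>s. velocity N m chi (pic k s) i))"

lemma pic_c: "pic k c i = Z i"
  by (cases k) auto

lemma bound_inD: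
  assumes "t \<in> {c..c+hh}" "\<And>i. i \<in> {1..N} \<Longrightarrow> \<bar>Y i - Z i\<bar> \<le> MM * (t - c)"
  shows "inD N \<delta> Y"
proof (rule inD_close[OF Zd])
  fix i assume "i \<in> {1..N}"
  then have "\<bar>Y i - Z i\<bar> \<le> MM * (t - c)" by (rule assms(2))
  also have "\<dots> \<le> MM * hh" using assms(1) MM_pos by (intro mult_left_mono) auto
  finally show "\<bar>Y i - Z i\<bar> \<le> \<delta>/2" using hh_M by simp
qed

definition "pinv k \<longleftrightarrow> (\<forall>i\<in>{1..N}. continuous_on {c..c+hh} (\<lambda>t. pic k t i)) \<and>
   (\<forall>t\<in>{c..c+hh}. \<forall>i\<in>{1..N}. \<bar>pic k t i - Z i\<bar> \<le> MM * (t - c))"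

lemma inv_inD: "pinv k \<Longrightarrow> t \<in> {c..c+hh} \<Longrightarrow> inD N \<delta> (pic k t)"
  unfolding pinv_def by (intro bound_inD) auto

lemma inv_vel_cont: "pinv k \<Longrightarrow> i \<in> {1..N} \<Longrightarrow> continuous_on {c..c+hh} (\<lambda>s. velocity N m chi (pic k s) i)"
  by (rule vel_cont[where \<delta>=\<delta>]) (use inv_inD dpos m1 in \<open>auto simp: pinv_def\<close>)

lemma pic_deriv:
  assumes "pinv k" "i \<in> {1..N}" "t \<in> {c..c+hh}"
  shows "((\<lambda>t. pic (Suc k) t i) has_real_derivative velocity N m chi (pic k t) i) (at t within {c..c+hh})"
proof -
  have "((\<lambda>t. Z i + integral {c..t} (\<lambda>s. velocity N m chi (pic k s) i)) has_real_derivative 0 + velocity N m chi (pic k t) i) (at t within {c..c+hh})"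
    by (intro DERIV_add DERIV_const integral_has_real_derivative inv_vel_cont assms)
  then show ?thesis by simp
qed

lemma inv_all: "pinv k"
proof (induction k)
  case 0
  then show ?case unfolding pinv_def using MM_pos by auto
next
  case (Suc k)
  have cont: "continuous_on {c..c+hh} (\<lambda>t. pic (Suc k) t i)" if "i \<in> {1..N}" for i
    by (rule DERIV_continuous_on[OF pic_deriv[OF Suc that]])
  have bd: "\<bar>pic (Suc k) t i - Z i\<bar> \<le> MM * (t - c)" if t: "t \<in> {c..c+hh}" and i: "i \<in> {1..N}" for t i
  proof -
    have "\<bar>pic (Suc k) t i - pic (Suc k) c i\<bar> \<le> MM * (t - c)"
    proof (rule deriv_bound[where f="\<lambda>t. pic (Suc k) t i" and f'="\<lambda>s. velocity N m chi (pic k s) i"])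
      show "c \<le> t" using t by simp
      fix x assume x: "x \<in> {c..t}"
      then have x': "x \<in> {c..c+hh}" using t by auto
      show "((\<lambda>t. pic (Suc k) t i) has_real_derivative velocity N m chi (pic k x) i) (at x within {c..t})"
        by (rule DERIV_subset[OF pic_deriv[OF Suc i x']]) (use t in auto)
      show "\<bar>velocity N m chi (pic k x) i\<bar> \<le> MM"
        unfolding MM_def by (rule vel_bound[OF inv_inD[OF Suc x'] dpos _ i]) (use m1 in simp)
    qed
    then show ?thesis by (simp add: pic_c)
  qed
  show ?case unfolding pinv_def using cont bd by auto
qed

definition "BB k = real N * MM * hh * (1/2)^k"

lemma pic_contr: "t \<in> {c..c+hh} \<Longrightarrow> nrm N (pic (Suc k) t) (pic k t) \<le> BB k"
proof (induction k arbitrary: t)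
  case 0
  have "nrm N (pic (Suc 0) t) (pic 0 t) \<le> real N * (MM * hh)"
  proof (rule nrm_le_card)
    fix i assume i: "i \<in> {1..N}"
    have "\<bar>pic (Suc 0) t i - Z i\<bar> \<le> MM * (t - c)" using inv_all[of 1] 0 i unfolding pinv_def by auto
    also have "\<dots> \<le> MM * hh" using 0 MM_pos by (intro mult_left_mono) auto
    finally show "\<bar>pic (Suc 0) t i - pic 0 t i\<bar> \<le> MM * hh" by simp
  qed
  then show ?case unfolding BB_def by simp
next
  case (Suc k)
  have "nrm N (pic (Suc (Suc k)) t) (pic (Suc k) t) \<le> real N * (LL * BB k * hh)"
  proof (rule nrm_le_card)
    fix i assume i: "i \<in> {1..N}"
    have "\<bar>(pic (Suc (Suc k)) t i - pic (Suc k) t i) - (pic (Suc (Suc k)) c i - pic (Suc k) c i)\<bar> \<le> (LL * BB k) * (t - c)"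
    proof (rule deriv_bound[where f="\<lambda>t. pic (Suc (Suc k)) t i - pic (Suc k) t i"
          and f'="\<lambda>s. velocity N m chi (pic (Suc k) s) i - velocity N m chi (pic k s) i"])
      show "c \<le> t" using Suc.prems by simp
      fix x assume x: "x \<in> {c..t}"
      then have x': "x \<in> {c..c+hh}" using Suc.prems by auto
      show "((\<lambda>t. pic (Suc (Suc k)) t i - pic (Suc k) t i) has_real_derivative
          velocity N m chi (pic (Suc k) x) i - velocity N m chi (pic k x) i) (at x within {c..t})"
        by (rule DERIV_subset[OF DERIV_diff[OF pic_deriv[OF inv_all i x'] pic_deriv[OF inv_all i x']]])
          (use Suc.prems in auto)
      have "\<bar>velocity N m chi (pic (Suc k) x) i - velocity N m chi (pic k x) i\<bar> \<le> LL * nrm N (pic (Suc k) x) (pic k x)"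
        unfolding LL_def by (rule vel_lip[OF inv_inD[OF inv_all x'] inv_inD[OF inv_all x'] dpos _ i]) (use m1 in simp)
      also have "\<dots> \<le> LL * BB k" using Suc.IH[OF x'] LL_pos by (intro mult_left_mono) auto
      finally show "\<bar>velocity N m chi (pic (Suc k) x) i - velocity N m chi (pic k x) i\<bar> \<le> LL * BB k" .
    qed
    also have "\<dots> \<le> (LL * BB k) * hh"
      using Suc.prems LL_pos by (intro mult_left_mono) (auto simp: BB_def intro!: mult_nonneg_nonneg less_imp_le[OF MM_pos] less_imp_le[OF hh_pos])
    finally show "\<bar>pic (Suc (Suc k)) t i - pic (Suc k) t i\<bar> \<le> LL * BB k * hh" by (simp add: pic_c)
  qed
  also have "\<dots> = (real N * LL * hh) * BB k" by (simp add: algebra_simps)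
  also have "\<dots> \<le> (1/2) * BB k"
    using hh_L by (intro mult_right_mono) (auto simp: BB_def intro!: mult_nonneg_nonneg less_imp_le[OF MM_pos] less_imp_le[OF hh_pos])
  also have "\<dots> = BB (Suc k)" unfolding BB_def by simp
  finally show ?case .
qed

definition "dlt k t i = pic (Suc k) t i - pic k t i"

lemma dlt_bound: "t \<in> {c..c+hh} \<Longrightarrow> i \<in> {1..N} \<Longrightarrow> \<bar>dlt k t i\<bar> \<le> BB k"
  unfolding dlt_def using nrm_ge[of i N "pic (Suc k) t" "pic k t"] pic_contr[of t k] by auto

lemma BB_summable: "summable BB"
  unfolding BB_def by (intro summable_mult) simp

lemma dlt_summable: "t \<in> {c..c+hh} \<Longrightarrow> i \<in> {1..N} \<Longrightarrow> summable (\<lambda>k. dlt k t i)"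
  by (rule summable_comparison_test[OF _ BB_summable]) (use dlt_bound in auto)

definition "ysol t i = Z i + (\<Sum>k. dlt k t i)"

definition "EE n = 2 * BB n"

lemma EE_lim: "EE \<longlonglongrightarrow> 0"
proof -
  have "(\<lambda>n. 2 * (real N * MM * hh) * (1/2::real)^n) \<longlonglongrightarrow> 2 * (real N * MM * hh) * 0"
    by (intro tendsto_intros LIMSEQ_power_zero) auto
  then show ?thesis unfolding EE_def BB_def by (simp add: mult.assoc)
qed

lemma EE_nonneg: "EE n \<ge> 0"
  unfolding EE_def BB_def using MM_pos hh_pos by simp

lemma pic_tele: "pic n t i = Z i + (\<Sum>k<n. dlt k t i)"
  unfolding dlt_def using sum_lessThan_telescope[of "\<lambda>k. pic k t i" n] by simp

lemma tail: "t \<in> {c..c+hh} \<Longrightarrow> i \<in> {1..N} \<Longrightarrow> \<bar>ysol t i - pic n t i\<bar> \<le> EE n"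
proof -
  assume t: "t \<in> {c..c+hh}" and i: "i \<in> {1..N}"
  have s: "summable (\<lambda>k. dlt k t i)" by (rule dlt_summable[OF t i])
  have "ysol t i - pic n t i = (\<Sum>k. dlt (k + n) t i)"
    unfolding ysol_def pic_tele suminf_minus_initial_segment[OF s] by simp
  moreover have "norm (\<Sum>k. dlt (k + n) t i) \<le> (\<Sum>k. BB (k + n))"
    by (rule norm_suminf_le) (use dlt_bound[OF t i] summable_ignore_initial_segment[OF BB_summable] in auto)
  moreover have "(\<Sum>k. BB (k + n)) = EE n"
  proof -
    have "(\<Sum>k. BB (k + n)) = (\<Sum>k. BB n * (1/2)^k)"
      unfolding BB_def by (simp add: power_add mult_ac)
    also have "\<dots> = BB n * (\<Sum>k. (1/2::real)^k)" by (rule suminf_mult) simp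
    also have "\<dots> = EE n" unfolding EE_def using suminf_geometric[of "1/2::real"] by simp
    finally show ?thesis .
  qed
  ultimately show ?thesis by simp
qed

lemma ysol_c: "ysol c i = Z i"
  unfolding ysol_def dlt_def by (simp add: pic_c)

lemma ysol_bound: "t \<in> {c..c+hh} \<Longrightarrow> i \<in> {1..N} \<Longrightarrow> \<bar>ysol t i - Z i\<bar> \<le> MM * (t - c)"
proof (rule le_of_lim[OF _ EE_lim])
  fix n assume t: "t \<in> {c..c+hh}" and i: "i \<in> {1..N}"
  have "\<bar>pic n t i - Z i\<bar> \<le> MM * (t - c)" using inv_all[of n] t i unfolding pinv_def by auto
  then show "\<bar>ysol t i - Z i\<bar> \<le> MM * (t - c) + EE n" using tail[OF t i, of n] by linarith
qed

lemma ysol_inD: "t \<in> {c..c+hh} \<Longrightarrow> inD N \<delta> (ysol t)"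
  by (rule bound_inD) (use ysol_bound in auto)

lemma pic_sum: "t \<in> {c..c+hh} \<Longrightarrow> (\<Sum>i=1..N. pic k t i) = (\<Sum>i=1..N. Z i)"
proof (cases k)
  case 0 then show ?thesis by simp
next
  case (Suc k')
  assume t: "t \<in> {c..c+hh}"
  have "\<bar>(\<Sum>i=1..N. pic (Suc k') t i) - (\<Sum>i=1..N. pic (Suc k') c i)\<bar> \<le> 0 * (t - c)"
  proof (rule deriv_bound[where f'="\<lambda>s. \<Sum>i=1..N. velocity N m chi (pic k' s) i"])
    show "c \<le> t" using t by simp
    fix x assume x: "x \<in> {c..t}"
    then have x': "x \<in> {c..c+hh}" using t by auto
    show "((\<lambda>t. \<Sum>i=1..N. pic (Suc k') t i) has_real_derivative (\<Sum>i=1..N. velocity N m chi (pic k' x) i)) (at x within {c..t})"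
      by (rule DERIV_subset[OF DERIV_sum[OF pic_deriv[OF inv_all _ x']]]) (use t in auto)
    show "\<bar>\<Sum>i=1..N. velocity N m chi (pic k' x) i\<bar> \<le> 0" using sum_vel_zero[OF N1] by simp
  qed
  then show ?thesis using Suc by (simp add: pic_c)
qed

lemma ysol_sum: "t \<in> {c..c+hh} \<Longrightarrow> (\<Sum>i=1..N. ysol t i) = (\<Sum>i=1..N. Z i)"
proof -
  assume t: "t \<in> {c..c+hh}"
  have "\<bar>(\<Sum>i=1..N. ysol t i) - (\<Sum>i=1..N. Z i)\<bar> \<le> 0"
  proof (rule le_of_lim[where E="\<lambda>n. real N * EE n"])
    fix n
    have "\<bar>(\<Sum>i=1..N. ysol t i) - (\<Sum>i=1..N. Z i)\<bar> = \<bar>\<Sum>i=1..N. ysol t i - pic n t i\<bar>"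
      using pic_sum[OF t, of n] by (simp add: sum_subtractf)
    also have "\<dots> \<le> (\<Sum>i=1..N. \<bar>ysol t i - pic n t i\<bar>)" by (rule sum_abs)
    also have "\<dots> \<le> real N * EE n"
      using sum_bounded_above[of "{1..N}" "\<lambda>i. \<bar>ysol t i - pic n t i\<bar>" "EE n"] tail[OF t] by auto
    finally show "\<bar>(\<Sum>i=1..N. ysol t i) - (\<Sum>i=1..N. Z i)\<bar> \<le> 0 + real N * EE n" by simp
  next
    show "(\<lambda>n. real N * EE n) \<longlonglongrightarrow> 0" using tendsto_mult_right_zero[OF EE_lim] by simp
  qed
  then show ?thesis by simp
qed

lemma ysol_cont: "i \<in> {1..N} \<Longrightarrow> continuous_on {c..c+hh} (\<lambda>t. ysol t i)"
proof (rule uniform_limit_theorem[where f="\<lambda>n t. pic n t i" and F=sequentially])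
  assume i: "i \<in> {1..N}"
  show "\<forall>\<^sub>F n in sequentially. continuous_on {c..c+hh} (\<lambda>t. pic n t i)"
    using inv_all i unfolding pinv_def by auto
  show "uniform_limit {c..c+hh} (\<lambda>n t. pic n t i) (\<lambda>t. ysol t i) sequentially"
  proof (rule uniform_limitI)
    fix e :: real assume e: "e > 0"
    have "\<forall>\<^sub>F n in sequentially. EE n < e" using order_tendstoD(2)[OF EE_lim e] .
    then show "\<forall>\<^sub>F n in sequentially. \<forall>t\<in>{c..c+hh}. dist (pic n t i) (ysol t i) < e"
    proof eventually_elim
      case (elim n)
      show ?case
      proof
        fix t assume t: "t \<in> {c..c+hh}"
        have "\<bar>ysol t i - pic n t i\<bar> \<le> EE n" by (rule tail[OF t i])
        then show "dist (pic n t i) (ysol t i) < e" using elim by (simp add: dist_real_def abs_minus_commute)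
      qed
    qed
  qed
qed simp

lemma ysol_vel_cont: "i \<in> {1..N} \<Longrightarrow> continuous_on {c..c+hh} (\<lambda>s. velocity N m chi (ysol s) i)"
  by (rule vel_cont[where \<delta>=\<delta>]) (use ysol_cont ysol_inD dpos m1 in auto)

lemma ysol_integral:
  assumes t: "t \<in> {c..c+hh}" and i: "i \<in> {1..N}"
  shows "ysol t i = Z i + integral {c..t} (\<lambda>s. velocity N m chi (ysol s) i)"
proof -
  define G where "G t = Z i + integral {c..t} (\<lambda>s. velocity N m chi (ysol s) i)" for t
  have dG: "(G has_real_derivative velocity N m chi (ysol x) i) (at x within {c..c+hh})" if "x \<in> {c..c+hh}" for x
  proof -
    have "(G has_real_derivative 0 + velocity N m chi (ysol x) i) (at x within {c..c+hh})"
      unfolding G_def by (intro DERIV_add DERIV_const integral_has_real_derivative ysol_vel_cont i that)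
    then show ?thesis by simp
  qed
  have "\<bar>ysol t i - G t\<bar> \<le> 0"
  proof (rule le_of_lim[where E="\<lambda>n. EE (Suc n) + LL * (real N * EE n) * hh"])
    fix n
    have "\<bar>(pic (Suc n) t i - G t) - (pic (Suc n) c i - G c)\<bar> \<le> (LL * (real N * EE n)) * (t - c)"
    proof (rule deriv_bound[where f="\<lambda>t. pic (Suc n) t i - G t"
          and f'="\<lambda>s. velocity N m chi (pic n s) i - velocity N m chi (ysol s) i"])
      show "c \<le> t" using t by simp
      fix x assume x: "x \<in> {c..t}"
      then have x': "x \<in> {c..c+hh}" using t by auto
      show "((\<lambda>t. pic (Suc n) t i - G t) has_real_derivative
          velocity N m chi (pic n x) i - velocity N m chi (ysol x) i) (at x within {c..t})"
        by (rule DERIV_subset[OF DERIV_diff[OF pic_deriv[OF inv_all i x'] dG[OF x']]]) (use t in auto)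
      have "\<bar>velocity N m chi (pic n x) i - velocity N m chi (ysol x) i\<bar> \<le> LL * nrm N (pic n x) (ysol x)"
        unfolding LL_def by (rule vel_lip[OF inv_inD[OF inv_all x'] ysol_inD[OF x'] dpos _ i]) (use m1 in simp)
      also have "\<dots> \<le> LL * (real N * EE n)"
      proof (intro mult_left_mono nrm_le_card)
        fix j assume "j \<in> {1..N}"
        then show "\<bar>pic n x j - ysol x j\<bar> \<le> EE n" using tail[OF x', of j n] by (simp add: abs_minus_commute)
      qed (use LL_pos in auto)
      finally show "\<bar>velocity N m chi (pic n x) i - velocity N m chi (ysol x) i\<bar> \<le> LL * (real N * EE n)" .
    qed
    also have "\<dots> \<le> LL * (real N * EE n) * hh"
      using t LL_pos EE_nonneg[of n] by (intro mult_left_mono) auto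
    finally have a: "\<bar>pic (Suc n) t i - G t\<bar> \<le> LL * (real N * EE n) * hh"
      by (simp add: pic_c G_def)
    have b: "\<bar>ysol t i - pic (Suc n) t i\<bar> \<le> EE (Suc n)" by (rule tail[OF t i])
    show "\<bar>ysol t i - G t\<bar> \<le> 0 + (EE (Suc n) + LL * (real N * EE n) * hh)" using a b by linarith
  next
    have "(\<lambda>n. EE (Suc n) + LL * (real N * EE n) * hh) \<longlonglongrightarrow> 0 + LL * (real N * 0) * hh"
      by (intro tendsto_intros EE_lim LIMSEQ_Suc)
    then show "(\<lambda>n. EE (Suc n) + LL * (real N * EE n) * hh) \<longlonglongrightarrow> 0" by simp
  qed
  then show ?thesis unfolding G_def by simp
qed

lemma ysol_deriv:
  assumes t: "t \<in> {c..c+hh}" and i: "i \<in> {1..N}"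
  shows "((\<lambda>s. ysol s i) has_real_derivative velocity N m chi (ysol t) i) (at t within {c..c+hh})"
proof -
  have "((\<lambda>t. Z i + integral {c..t} (\<lambda>s. velocity N m chi (ysol s) i)) has_real_derivative 0 + velocity N m chi (ysol t) i) (at t within {c..c+hh})"
    by (intro DERIV_add DERIV_const integral_has_real_derivative ysol_vel_cont i t)
  then have "((\<lambda>t. Z i + integral {c..t} (\<lambda>s. velocity N m chi (ysol s) i)) has_real_derivative velocity N m chi (ysol t) i) (at t within {c..c+hh})"
    by simp
  then show ?thesis
    by (rule has_field_derivative_transform_within[where d=1]) (use t ysol_integral[OF _ i] in auto)
qed

end

lemma sum_abs_sq:
  fixes d :: "nat \<Rightarrow> real"
  assumes "finite A"
  shows "(\<Sum>i\<in>A. \<bar>d i\<bar>)^2 \<le> real (card A) * (\<Sum>i\<in>A. (d i)^2)"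
proof -
  have "(\<Sum>i\<in>A. \<bar>d i\<bar>)^2 = (\<Sum>i\<in>A. \<Sum>j\<in>A. \<bar>d i\<bar> * \<bar>d j\<bar>)"
    by (simp add: power2_eq_square sum_product)
  also have "\<dots> \<le> (\<Sum>i\<in>A. \<Sum>j\<in>A. ((d i)^2 + (d j)^2) / 2)"
  proof (intro sum_mono)
    fix i j
    have "0 \<le> (\<bar>d i\<bar> - \<bar>d j\<bar>)^2" by simp
    then show "\<bar>d i\<bar> * \<bar>d j\<bar> \<le> ((d i)^2 + (d j)^2) / 2"
      by (simp add: power2_eq_square algebra_simps)
  qed
  also have "\<dots> = (\<Sum>i\<in>A. \<Sum>j\<in>A. (d i)^2 / 2) + (\<Sum>i\<in>A. \<Sum>j\<in>A. (d j)^2 / 2)"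
    by (simp add: add_divide_distrib sum.distrib)
  also have "\<dots> = real (card A) * (\<Sum>i\<in>A. (d i)^2)"
  proof -
    have "(\<Sum>i\<in>A. \<Sum>j\<in>A. (d j)^2 / 2) = (\<Sum>i\<in>A. \<Sum>j\<in>A. (d i)^2 / 2)" by (rule sum.swap)
    then show ?thesis by (simp add: sum_divide_distrib[symmetric] sum_distrib_left[symmetric] mult.commute)
  qed
  finally show ?thesis .
qed

lemma uniqueness:
  fixes Y W :: "real \<Rightarrow> nat \<Rightarrow> real"
  assumes ab: "a \<le> b" and dpos: "\<delta> > 0" and m: "m > 0"
    and DY: "\<And>t. t \<in> {a..b} \<Longrightarrow> inD N \<delta> (Y t)" and DW: "\<And>t. t \<in> {a..b} \<Longrightarrow> inD N \<delta> (W t)"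
    and dY: "\<And>t i. t \<in> {a..b} \<Longrightarrow> i \<in> {1..N} \<Longrightarrow> ((\<lambda>s. Y s i) has_real_derivative velocity N m chi (Y t) i) (at t within {a..b})"
    and dW: "\<And>t i. t \<in> {a..b} \<Longrightarrow> i \<in> {1..N} \<Longrightarrow> ((\<lambda>s. W s i) has_real_derivative velocity N m chi (W t) i) (at t within {a..b})"
    and init: "\<And>i. i \<in> {1..N} \<Longrightarrow> Y a i = W a i"
  shows "\<And>i. i \<in> {1..N} \<Longrightarrow> Y b i = W b i"
proof -
  define L where "L = velL N m chi \<delta>"
  have L0: "L \<ge> 0" unfolding L_def velL_def using dpos m by (intro mult_nonneg_nonneg) auto
  define K where "K = 2 * L * real N"
  define S where "S t = (\<Sum>i=1..N. (Y t i - W t i)^2)" for t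
  define E where "E t = exp (-(K * t)) * S t" for t
  have dS: "(S has_real_derivative (\<Sum>i=1..N. 2 * (Y t i - W t i) * (velocity N m chi (Y t) i - velocity N m chi (W t) i))) (at t within {a..b})"
    if t: "t \<in> {a..b}" for t
    unfolding S_def
  proof (rule DERIV_sum)
    fix i assume i: "i \<in> {1..N}"
    have "((\<lambda>s. (Y s i - W s i)^2) has_real_derivative of_nat 2 * ((velocity N m chi (Y t) i - velocity N m chi (W t) i) * (Y t i - W t i)^(2 - Suc 0))) (at t within {a..b})"
      by (rule DERIV_power[OF DERIV_diff[OF dY[OF t i] dW[OF t i]]])
    moreover have "of_nat 2 * ((velocity N m chi (Y t) i - velocity N m chi (W t) i) * (Y t i - W t i)^(2 - Suc 0))
       = 2 * (Y t i - W t i) * (velocity N m chi (Y t) i - velocity N m chi (W t) i)" by simp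
    ultimately show "((\<lambda>s. (Y s i - W s i)^2) has_real_derivative 2 * (Y t i - W t i) * (velocity N m chi (Y t) i - velocity N m chi (W t) i)) (at t within {a..b})"
      by metis
  qed
  have key: "(\<Sum>i=1..N. 2 * (Y t i - W t i) * (velocity N m chi (Y t) i - velocity N m chi (W t) i)) \<le> K * S t"
    if t: "t \<in> {a..b}" for t
  proof -
    define n where "n = nrm N (Y t) (W t)"
    have "(\<Sum>i=1..N. 2 * (Y t i - W t i) * (velocity N m chi (Y t) i - velocity N m chi (W t) i))
        \<le> (\<Sum>i=1..N. 2 * \<bar>Y t i - W t i\<bar> * (L * n))"
    proof (rule sum_mono)
      fix i assume i: "i \<in> {1..N}"
      have l: "\<bar>velocity N m chi (Y t) i - velocity N m chi (W t) i\<bar> \<le> L * n"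
        unfolding L_def n_def by (rule vel_lip[OF DY[OF t] DW[OF t] dpos m i])
      have "2 * (Y t i - W t i) * (velocity N m chi (Y t) i - velocity N m chi (W t) i)
          \<le> \<bar>2 * (Y t i - W t i) * (velocity N m chi (Y t) i - velocity N m chi (W t) i)\<bar>" by simp
      also have "\<dots> = 2 * \<bar>Y t i - W t i\<bar> * \<bar>velocity N m chi (Y t) i - velocity N m chi (W t) i\<bar>"
        by (simp only: abs_mult abs_numeral)
      also have "\<dots> \<le> 2 * \<bar>Y t i - W t i\<bar> * (L * n)" using l by (intro mult_left_mono) auto
      finally show "2 * (Y t i - W t i) * (velocity N m chi (Y t) i - velocity N m chi (W t) i) \<le> 2 * \<bar>Y t i - W t i\<bar> * (L * n)" .
    qed
    also have "\<dots> = 2 * L * n^2"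
      unfolding n_def nrm_def by (simp add: sum_distrib_left sum_distrib_right power2_eq_square mult_ac)
    also have "\<dots> \<le> 2 * L * (real N * S t)"
    proof -
      have "n^2 \<le> real (card {1..N}) * S t"
        unfolding n_def nrm_def S_def by (rule sum_abs_sq) simp
      then show ?thesis using L0 by (intro mult_left_mono) auto
    qed
    also have "\<dots> = K * S t" unfolding K_def by simp
    finally show ?thesis .
  qed
  have "E b \<le> E a"
  proof (rule deriv_nonpos_mono[where f=E and a=a and b=b and f'="\<lambda>t. exp (-(K*t)) * (-K) * S t + exp (-(K*t)) * (\<Sum>i=1..N. 2 * (Y t i - W t i) * (velocity N m chi (Y t) i - velocity N m chi (W t) i))"])
    show "a \<le> b" by fact
    fix x assume x: "x \<in> {a..b}"
    have "((\<lambda>t. exp (-(K*t))) has_real_derivative exp (-(K*x)) * (-K)) (at x within {a..b})"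
      by (auto intro!: derivative_eq_intros)
    from DERIV_mult[OF this dS[OF x]]
    show "(E has_real_derivative exp (-(K*x)) * (-K) * S x + exp (-(K*x)) * (\<Sum>i=1..N. 2 * (Y x i - W x i) * (velocity N m chi (Y x) i - velocity N m chi (W x) i))) (at x within {a..b})"
      unfolding E_def by (simp add: mult.commute)
    have "exp (-(K*x)) * (\<Sum>i=1..N. 2 * (Y x i - W x i) * (velocity N m chi (Y x) i - velocity N m chi (W x) i)) \<le> exp (-(K*x)) * (K * S x)"
      using key[OF x] by (intro mult_left_mono) auto
    then show "exp (-(K*x)) * (-K) * S x + exp (-(K*x)) * (\<Sum>i=1..N. 2 * (Y x i - W x i) * (velocity N m chi (Y x) i - velocity N m chi (W x) i)) \<le> 0"
      by (simp add: algebra_simps)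
  qed
  moreover have "E a = 0" unfolding E_def S_def using init by simp
  moreover have "S b \<ge> 0" unfolding S_def by (simp add: sum_nonneg)
  ultimately have "S b = 0" unfolding E_def by (simp add: mult_le_0_iff)
  then have "\<forall>i\<in>{1..N}. (Y b i - W b i)^2 = 0"
    unfolding S_def by (subst sum_nonneg_eq_0_iff[symmetric]) auto
  then show "\<And>i. i \<in> {1..N} \<Longrightarrow> Y b i = W b i" by auto
qed

lemma local_exist:
  assumes N: "N \<ge> 1" and m: "m > 1" and dpos: "\<delta> > 0"
  shows "\<exists>h>0. \<forall>Z c. inD N (2*\<delta>) Z \<longrightarrow> (\<exists>y.
     (\<forall>t\<in>{c..c+h}. \<forall>i\<in>{1..N}. ((\<lambda>s. y s i) has_real_derivative velocity N m chi (y t) i) (at t within {c..c+h})) \<and>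
     (\<forall>t\<in>{c..c+h}. inD N \<delta> (y t) \<and> (\<Sum>i=1..N. y t i) = (\<Sum>i=1..N. Z i)) \<and> (\<forall>i. y c i = Z i))"
proof -
  define h where "h = min (\<delta> / (2 * velM N m chi \<delta>)) (1 / (2 * real N * velL N m chi \<delta>))"
  have hpos: "h > 0"
  proof -
    have "velM N m chi \<delta> > 0" unfolding velM_def using dpos by (intro mult_pos_pos) (auto intro: add_pos_nonneg)
    moreover have "velL N m chi \<delta> > 0" unfolding velL_def using dpos m by (intro mult_pos_pos) (auto intro: add_pos_nonneg)
    ultimately show ?thesis unfolding h_def using N dpos by auto
  qed
  show ?thesis
  proof (intro exI[of _ h] conjI allI impI hpos)
    fix Z c assume Z: "inD N (2*\<delta>) Z"
    interpret P: picard_loc N m chi \<delta> Z c by unfold_locales (use N m dpos Z in auto)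
    have hh: "P.hh = h" unfolding P.hh_def P.MM_def P.LL_def h_def ..
    show "\<exists>y. (\<forall>t\<in>{c..c+h}. \<forall>i\<in>{1..N}. ((\<lambda>s. y s i) has_real_derivative velocity N m chi (y t) i) (at t within {c..c+h})) \<and>
     (\<forall>t\<in>{c..c+h}. inD N \<delta> (y t) \<and> (\<Sum>i=1..N. y t i) = (\<Sum>i=1..N. Z i)) \<and> (\<forall>i. y c i = Z i)"
      by (rule exI[of _ P.ysol]) (use P.ysol_deriv P.ysol_inD P.ysol_sum P.ysol_c hh in auto)
  qed
qed

lemma gap_or_seq:
  fixes g :: "real \<Rightarrow> real" and Tr :: real
  assumes Tr: "Tr > 0"
    and ns: "\<not> (\<exists>tn :: nat \<Rightarrow> real. (\<forall>n. 0 \<le> tn n \<and> tn n < Tr) \<and> tn \<longlonglongrightarrow> Tr \<and> (\<lambda>n. g (tn n)) \<longlonglongrightarrow> 0)"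
    and pos: "\<And>t. 0 \<le> t \<Longrightarrow> t < Tr \<Longrightarrow> g t > 0"
  shows "\<exists>d>0. \<exists>e>0. \<forall>t. Tr - e < t \<and> t < Tr \<longrightarrow> d \<le> g t"
proof (rule ccontr)
  assume H: "\<not> ?thesis"
  define r where "r n = inverse (real (Suc n))" for n
  have rpos: "r n > 0" for n unfolding r_def by simp
  have "\<forall>n. \<exists>t. Tr - min (r n) Tr < t \<and> t < Tr \<and> g t < r n"
  proof
    fix n
    have "min (r n) Tr > 0" using rpos Tr by simp
    then show "\<exists>t. Tr - min (r n) Tr < t \<and> t < Tr \<and> g t < r n"
      using H rpos[of n] by (meson not_le)
  qed
  then obtain tn where tn: "\<And>n. Tr - min (r n) Tr < tn n \<and> tn n < Tr \<and> g (tn n) < r n"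
    by metis
  have t0: "0 \<le> tn n" for n using tn[of n] by linarith
  have rl: "r \<longlonglongrightarrow> 0" unfolding r_def by (rule LIMSEQ_inverse_real_of_nat)
  have "(\<lambda>n. tn n - Tr) \<longlonglongrightarrow> 0"
  proof (rule Lim_null_comparison[OF _ rl])
    show "\<forall>\<^sub>F n in sequentially. norm (tn n - Tr) \<le> r n"
    proof (intro always_eventually allI)
      fix n
      have a: "Tr - min (r n) Tr < tn n" "tn n < Tr" using tn[of n] by auto
      have "min (r n) Tr \<le> r n" by simp
      then show "norm (tn n - Tr) \<le> r n" using a by (simp add: abs_real_def)
    qed
  qed
  then have l1: "tn \<longlonglongrightarrow> Tr" by (simp add: Lim_null[symmetric])
  have l2: "(\<lambda>n. g (tn n)) \<longlonglongrightarrow> 0"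
  proof (rule Lim_null_comparison[OF _ rl])
    show "\<forall>\<^sub>F n in sequentially. norm (g (tn n)) \<le> r n"
    proof (intro always_eventually allI)
      fix n
      have a: "g (tn n) < r n" "tn n < Tr" using tn[of n] by auto
      have "g (tn n) > 0" using pos[OF t0 a(2)] .
      then show "norm (g (tn n)) \<le> r n" using a by simp
    qed
  qed
  show False using ns l1 l2 t0 tn by blast
qed

lemma deriv_local:
  assumes "(f has_real_derivative D) (at x within U)" "x \<in> S" "open S" "T \<inter> S - {x} = U \<inter> S - {x}"
  shows "(f has_real_derivative D) (at x within T)"
  using at_within_nhd[OF assms(2,3,4)] assms(1) by simp

lemma inD_weaken: "inD N d Y \<Longrightarrow> d' \<le> d \<Longrightarrow> inD N d' Y"
  unfolding inD_def by force

theorem proposition4p4: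
  fixes N :: nat and m chi :: real and X0 :: "nat \<Rightarrow> real"
    and T :: ereal and X :: "real \<Rightarrow> nat \<Rightarrow> real"
  assumes "m > 1" and "N \<ge> 2" and "chi > C_const N m"
    and "in_R N X0" and "F_energy N m chi X0 < 0"
    and "is_maximal_solution N m chi X0 T X"
  shows "T < \<infinity> \<and>
    (\<exists>i0\<in>{1..<N}. \<exists>tn :: nat \<Rightarrow> real.
       (\<forall>n. 0 \<le> tn n \<and> ereal (tn n) < T) \<and>
       tn \<longlonglongrightarrow> real_of_ereal T \<and>
       (\<lambda>n. X (tn n) (i0+1) - X (tn n) i0) \<longlonglongrightarrow> 0)"
proof -
  note m = assms(1)
  have N1: "N \<ge> 1" using assms(2) by simp
  have sol: "is_solution N m chi X0 T X" using assms(6) unfolding is_maximal_solution_def by simp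
  have Tfin: "T < \<infinity>" by (rule finite_time[OF m N1 assms(5) sol])
  have Tpos: "0 < T" using sol unfolding is_solution_def by simp
  define Tr where "Tr = real_of_ereal T"
  have TT: "T = ereal Tr" unfolding Tr_def using Tfin Tpos by (cases T) auto
  have Trpos: "Tr > 0" using Tpos TT by simp
  have X0: "X 0 = X0" using sol unfolding is_solution_def by simp
  have inR: "\<And>t. 0 \<le> t \<Longrightarrow> t < Tr \<Longrightarrow> in_R N (X t)"
    using sol TT unfolding is_solution_def by auto
  have dX: "\<And>t i. 0 \<le> t \<Longrightarrow> t < Tr \<Longrightarrow> i \<in> {1..N} \<Longrightarrow>
      ((\<lambda>s. X s i) has_real_derivative velocity N m chi (X t) i) (at t within {s. 0 \<le> s \<and> s < Tr})"
    using sol TT unfolding is_solution_def by auto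
  show ?thesis
  proof (intro conjI Tfin, rule ccontr)
    assume NB: "\<not> (\<exists>i0\<in>{1..<N}. \<exists>tn :: nat \<Rightarrow> real.
       (\<forall>n. 0 \<le> tn n \<and> ereal (tn n) < T) \<and>
       tn \<longlonglongrightarrow> real_of_ereal T \<and>
       (\<lambda>n. X (tn n) (i0+1) - X (tn n) i0) \<longlonglongrightarrow> 0)"
    have ch: "\<forall>i0\<in>{1..<N}. \<exists>p. fst p > 0 \<and> snd p > 0 \<and> (\<forall>t. Tr - snd p < t \<and> t < Tr \<longrightarrow> fst p \<le> X t (i0+1) - X t i0)"
    proof
      fix i0 assume i0: "i0 \<in> {1..<N}"
      have "\<exists>d>0. \<exists>e>0. \<forall>t. Tr - e < t \<and> t < Tr \<longrightarrow> d \<le> X t (i0+1) - X t i0"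
      proof (rule gap_or_seq[OF Trpos])
        show "\<not> (\<exists>tn :: nat \<Rightarrow> real. (\<forall>n. 0 \<le> tn n \<and> tn n < Tr) \<and> tn \<longlonglongrightarrow> Tr \<and> (\<lambda>n. X (tn n) (i0+1) - X (tn n) i0) \<longlonglongrightarrow> 0)"
        proof
          assume "\<exists>tn :: nat \<Rightarrow> real. (\<forall>n. 0 \<le> tn n \<and> tn n < Tr) \<and> tn \<longlonglongrightarrow> Tr \<and> (\<lambda>n. X (tn n) (i0+1) - X (tn n) i0) \<longlonglongrightarrow> 0"
          then obtain tn :: "nat \<Rightarrow> real" where tn: "\<forall>n. 0 \<le> tn n \<and> tn n < Tr" "tn \<longlonglongrightarrow> Tr" "(\<lambda>n. X (tn n) (i0+1) - X (tn n) i0) \<longlonglongrightarrow> 0"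
            by blast
          have "\<forall>n. 0 \<le> tn n \<and> ereal (tn n) < T" using tn(1) TT by simp
          moreover have "tn \<longlonglongrightarrow> real_of_ereal T" using tn(2) Tr_def by simp
          ultimately have ex: "\<exists>i0\<in>{1..<N}. \<exists>tn :: nat \<Rightarrow> real.
             (\<forall>n. 0 \<le> tn n \<and> ereal (tn n) < T) \<and> tn \<longlonglongrightarrow> real_of_ereal T \<and>
             (\<lambda>n. X (tn n) (i0+1) - X (tn n) i0) \<longlonglongrightarrow> 0"
            using tn(3) i0 by (intro bexI[OF exI[of _ tn] i0]) simp
          from NB ex show False by (rule notE)
        qed
        fix t :: real assume "0 \<le> t" "t < Tr"
        then show "0 < X t (i0+1) - X t i0" using inR i0 unfolding in_R_def by auto
      qed
      then obtain d e where de: "d > 0" "e > 0" "\<forall>t. Tr - e < t \<and> t < Tr \<longrightarrow> d \<le> X t (i0+1) - X t i0"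
        by blast
      show "\<exists>p. fst p > 0 \<and> snd p > 0 \<and> (\<forall>t. Tr - snd p < t \<and> t < Tr \<longrightarrow> fst p \<le> X t (i0+1) - X t i0)"
        by (rule exI[of _ "(d, e)"]) (use de in simp)
    qed
    from bchoice[OF ch] obtain f where f: "\<forall>i0\<in>{1..<N}. fst (f i0) > 0 \<and> snd (f i0) > 0 \<and> (\<forall>t. Tr - snd (f i0) < t \<and> t < Tr \<longrightarrow> fst (f i0) \<le> X t (i0+1) - X t i0)"
      by blast
    define dd where "dd i = fst (f i)" for i
    define ee where "ee i = snd (f i)" for i
    have dd: "\<And>i0. i0 \<in> {1..<N} \<Longrightarrow> dd i0 > 0 \<and> ee i0 > 0 \<and>
        (\<forall>t. Tr - ee i0 < t \<and> t < Tr \<longrightarrow> dd i0 \<le> X t (i0+1) - X t i0)"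
      using f by (simp add: dd_def ee_def)
    define d0 where "d0 = Min (dd ` {1..<N})"
    define e0 where "e0 = min (Min (ee ` {1..<N})) Tr"
    have ne: "{1..<N} \<noteq> {}" using assms(2) by auto
    have d0pos: "d0 > 0" unfolding d0_def using dd ne by (subst Min_gr_iff) auto
    have e0pos: "e0 > 0" unfolding e0_def using dd ne Trpos by (subst min_def) (auto simp: Min_gr_iff)
    have e0Tr: "e0 \<le> Tr" unfolding e0_def by simp
    have gapX: "inD N d0 (X t)" if "Tr - e0 < t" "t < Tr" for t
      unfolding inD_def
    proof
      fix i assume i: "i \<in> {1..<N}"
      have "e0 \<le> ee i" unfolding e0_def using i by (auto intro!: min.coboundedI1 Min_le)
      then have "dd i \<le> X t (i+1) - X t i" using dd[OF i] that by auto
      moreover have "d0 \<le> dd i" unfolding d0_def using i by (auto intro!: Min_le)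
      ultimately show "d0 \<le> X t (i+1) - X t i" by simp
    qed
    obtain h where hpos: "h > 0" and LE: "\<And>Z c. inD N (2*(d0/2)) Z \<Longrightarrow> (\<exists>y.
       (\<forall>t\<in>{c..c+h}. \<forall>i\<in>{1..N}. ((\<lambda>s. y s i) has_real_derivative velocity N m chi (y t) i) (at t within {c..c+h})) \<and>
       (\<forall>t\<in>{c..c+h}. inD N (d0/2) (y t) \<and> (\<Sum>i=1..N. y t i) = (\<Sum>i=1..N. Z i)) \<and> (\<forall>i. y c i = Z i))"
      using local_exist[OF N1 m, of "d0/2" chi] d0pos by auto
    define \<eta> where "\<eta> = min (h/2) (e0/2)"
    have \<eta>pos: "\<eta> > 0" unfolding \<eta>_def using hpos e0pos by simp
    define c where "c = Tr - \<eta>"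
    have c1: "Tr - e0 < c" "c < Tr" "0 < c" "Tr < c + h"
      unfolding c_def \<eta>_def using hpos e0pos e0Tr by auto
    have Xc: "inD N (2*(d0/2)) (X c)" using gapX[OF c1(1,2)] by simp
    obtain y where
      dy: "\<And>t i. t \<in> {c..c+h} \<Longrightarrow> i \<in> {1..N} \<Longrightarrow> ((\<lambda>s. y s i) has_real_derivative velocity N m chi (y t) i) (at t within {c..c+h})"
      and yD: "\<And>t. t \<in> {c..c+h} \<Longrightarrow> inD N (d0/2) (y t)"
      and ysum: "\<And>t. t \<in> {c..c+h} \<Longrightarrow> (\<Sum>i=1..N. y t i) = (\<Sum>i=1..N. X c i)"
      and yc: "\<And>i. y c i = X c i"
      using LE[OF Xc] by blast
    have sumXc: "(\<Sum>i=1..N. X c i) = 0" using inR[of c] c1 unfolding in_R_def by auto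
    have agree: "X t i = y t i" if t: "c \<le> t" "t < Tr" and i: "i \<in> {1..N}" for t i
    proof (rule uniqueness[where Y=X and W=y and a=c and b=t and \<delta>="d0/2" and m=m and N=N and chi=chi, OF t(1)])
      show "d0/2 > 0" using d0pos by simp
      show "m > 0" using m by simp
      fix s assume s: "s \<in> {c..t}"
      then have s1: "Tr - e0 < s" "s < Tr" "0 \<le> s" using c1 t by auto
      show "inD N (d0/2) (X s)" using inD_weaken[OF gapX[OF s1(1,2)]] d0pos by simp
      show "inD N (d0/2) (y s)" using yD s c1 t by auto
      fix j assume j: "j \<in> {1..N}"
      show "((\<lambda>s. X s j) has_real_derivative velocity N m chi (X s) j) (at s within {c..t})"
        by (rule DERIV_subset[OF dX[OF s1(3) s1(2) j]]) (use c1 t in auto)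
      show "((\<lambda>s. y s j) has_real_derivative velocity N m chi (y s) j) (at s within {c..t})"
        by (rule DERIV_subset[OF dy[OF _ j]]) (use s c1 t in auto)
    next
      fix j assume "j \<in> {1..N}" then show "X c j = y c j" using yc by simp
    qed (use i in auto)
    define Y where "Y t = (if t < Tr then X t else y t)" for t
    define D' where "D' = {s. 0 \<le> s \<and> ereal s < ereal (c+h)}"
    have solY: "is_solution N m chi X0 (ereal (c+h)) Y"
      unfolding is_solution_def
    proof (intro conjI allI impI)
      show "0 < ereal (c+h)" using c1 hpos by simp
      show "Y 0 = X0" unfolding Y_def using Trpos X0 by simp
      fix t assume t: "0 \<le> t \<and> ereal t < ereal (c+h)"
      show "in_R N (Y t)"
      proof (cases "t < Tr")
        case True then show ?thesis unfolding Y_def using inR t by simp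
      next
        case False
        then have tI: "t \<in> {c..c+h}" using t c1 by auto
        have "inD N (d0/2) (y t)" by (rule yD[OF tI])
        then show ?thesis unfolding Y_def using False inD_in_R[of N "d0/2" "y t"] d0pos ysum[OF tI] sumXc by simp
      qed
      show "\<forall>i\<in>{1..N}. ((\<lambda>s. Y s i) has_real_derivative velocity N m chi (Y t) i) (at t within {s. 0 \<le> s \<and> ereal s < ereal (c+h)})"
      proof
        fix i assume i: "i \<in> {1..N}"
        show "((\<lambda>s. Y s i) has_real_derivative velocity N m chi (Y t) i) (at t within {s. 0 \<le> s \<and> ereal s < ereal (c+h)})"
        proof (cases "t < Tr")
          case True
          have d1: "((\<lambda>s. X s i) has_real_derivative velocity N m chi (X t) i) (at t within {s. 0 \<le> s \<and> s < Tr})"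
            using dX[OF _ True i] t by simp
          have d2: "((\<lambda>s. Y s i) has_real_derivative velocity N m chi (X t) i) (at t within {s. 0 \<le> s \<and> s < Tr})"
            by (rule has_field_derivative_transform_within[OF d1, where d=1]) (use t True in \<open>auto simp: Y_def\<close>)
          have "((\<lambda>s. Y s i) has_real_derivative velocity N m chi (X t) i) (at t within {s. 0 \<le> s \<and> ereal s < ereal (c+h)})"
            by (rule deriv_local[OF d2, where S="{..<Tr}"]) (use True c1 in auto)
          then show ?thesis using True unfolding Y_def by simp
        next
          case False
          have tI: "t \<in> {c<..<c+h}" using t False c1 by auto
          have d1: "((\<lambda>s. y s i) has_real_derivative velocity N m chi (y t) i) (at t within {c<..<c+h})"
            by (rule DERIV_subset[OF dy[OF _ i]]) (use tI in auto)
          have d2: "((\<lambda>s. Y s i) has_real_derivative velocity N m chi (y t) i) (at t within {c<..<c+h})"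
          proof (rule has_field_derivative_transform_within[OF d1, where d=1])
            show "t \<in> {c<..<c+h}" by fact
            fix s assume s: "s \<in> {c<..<c+h}"
            show "y s i = Y s i"
            proof (cases "s < Tr")
              case True then show ?thesis unfolding Y_def using agree[of s i] s i by auto
            qed (simp add: Y_def)
          qed simp
          have "((\<lambda>s. Y s i) has_real_derivative velocity N m chi (y t) i) (at t within {s. 0 \<le> s \<and> ereal s < ereal (c+h)})"
            by (rule deriv_local[OF d2, where S="{c<..}"]) (use tI c1 in auto)
          then show ?thesis using False unfolding Y_def by simp
        qed
      qed
    qed
    have "T < ereal (c+h)" using TT c1 by simp
    moreover have "\<forall>t. 0 \<le> t \<and> ereal t < T \<longrightarrow> (\<forall>i\<in>{1..N}. Y t i = X t i)"
      unfolding Y_def using TT by auto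
    ultimately have "\<exists>T' Y. T < T' \<and> is_solution N m chi X0 T' Y \<and>
              (\<forall>t. 0 \<le> t \<and> ereal t < T \<longrightarrow> (\<forall>i\<in>{1..N}. Y t i = X t i))"
      using solY by blast
    then show False using assms(6) unfolding is_maximal_solution_def by simp
  qed
qed

end
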